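(* Let $d_1,d_2,e_1,e_2\ge2$ be integers, $d=d_1+d_2$, $n=d_1e_1d_2e_2$, and let $A$ be the $d\times n$ matrix whose columns are the vectors $i\,\mathbf{e}_\kappa\oplus j\,\mathbf{e}_\lambda\in\mathbb{N}^{d_1}\oplus\mathbb{N}^{d_2}$ for $(\kappa,i,\lambda,j)\in[d_1]\times[e_1]\times[d_2]\times[e_2]$. Then $$\mathrm{pos}(A)=\Bigl\{y\in\mathbb{R}^d_{\ge0}: y_1+\dots+y_{d_1}\le e_1(y_{d_1+1}+\dots+y_{d_1+d_2}),\ \ y_{d_1+1}+\dots+y_{d_1+d_2}\le e_2(y_1+\dots+y_{d_1})\Bigr\}.$$ This $d$-dimensional cone has $2d_1d_2$ rays and $d_1+d_2+2$ facets. It is the cone over a simple $(d-1)$-dimensional polytope which is combinatorially isomorphic to the product of simplices $\Delta_1\times\Delta_{d_1-1}\times\Delta_{d_2-1}$.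
   Context: $[m]=\{1,\dots,m\}$; $\mathbf{e}_\kappa$ and $\mathbf{e}_\lambda$ denote standard unit vectors in $\mathbb{R}^{d_1}$ and $\mathbb{R}^{d_2}$; $\mathrm{pos}(A)$ is the convex polyhedral cone spanned by the columns of $A$; $\Delta_k$ is the $k$-dimensional simplex. *)

theory Defs
  imports "HOL-Analysis.Analysis"
begin

definition pos_cone :: "('i \<Rightarrow> 'v::real_vector) \<Rightarrow> 'i set \<Rightarrow> 'v set" where
  "pos_cone a I = {\<Sum>k\<in>I. c k *\<^sub>R a k | c. \<forall>k\<in>I. 0 \<le> c k}"

definition col_vec :: "'a::finite \<Rightarrow> nat \<Rightarrow> 'b::finite \<Rightarrow> nat \<Rightarrow> real ^ ('a + 'b)" where
  "col_vec ka i la j = (\<chi> m. case m of Inl k \<Rightarrow> (if k = ka then real i else 0)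
                                     | Inr l \<Rightarrow> (if l = la then real j else 0))"

text \<open>Standard simplex of dimension CARD('n) - 1.\<close>
definition std_simplex :: "(real ^ ('n::finite)) set" where
  "std_simplex = {x. (\<forall>i. 0 \<le> x $ i) \<and> (\<Sum>i\<in>UNIV. x $ i) = 1}"

definition comb_iso :: "'u::euclidean_space set \<Rightarrow> 'w::euclidean_space set \<Rightarrow> bool" where
  "comb_iso P Q \<longleftrightarrow> (\<exists>f. bij_betw f {F. F face_of P} {G. G face_of Q} \<and>
      (\<forall>F1 F2. F1 face_of P \<longrightarrow> F2 face_of P \<longrightarrow> (F1 \<subseteq> F2 \<longleftrightarrow> f F1 \<subseteq> f F2)))"

definition simple_polytope :: "'u::euclidean_space set \<Rightarrow> bool" where
  "simple_polytope P \<longleftrightarrow> polytope P \<and>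
     (\<forall>v. v extreme_point_of P \<longrightarrow> int (card {F. F facet_of P \<and> v \<in> F}) = aff_dim P)"

end

theory Submission
  imports Defs "HOL-Analysis.Analysis"
begin

definition hface :: "('i \<Rightarrow> 'v::real_vector \<Rightarrow> real) \<Rightarrow> ('i \<Rightarrow> real) \<Rightarrow> 'i set \<Rightarrow> 'i set \<Rightarrow> 'v set" where
  "hface g b I T = {x. (\<forall>i\<in>I. g i x \<le> b i) \<and> (\<forall>i\<in>T. g i x = b i)}"

lemma lin_comb:
  assumes "linear f" shows "f ((1 - u) *\<^sub>R a + u *\<^sub>R c) = (1 - u) * f a + u * f c"
  using assms by (simp add: linear_add linear_scale)

lemma comb_le:
  fixes ga gc b u :: real
  assumes "0 \<le> u" "u \<le> 1" "ga \<le> b" "gc \<le> b"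
  shows "(1 - u) * ga + u * gc \<le> b"
proof -
  have "(1 - u) * ga \<le> (1 - u) * b" using assms by (intro mult_left_mono) auto
  moreover have "u * gc \<le> u * b" using assms by (intro mult_left_mono) auto
  ultimately show ?thesis by (simp add: algebra_simps)
qed

lemma comb_eq:
  fixes ga gc b u :: real
  assumes "0 < u" "u < 1" "ga \<le> b" "gc \<le> b" "(1 - u) * ga + u * gc = b"
  shows "ga = b \<and> gc = b"
proof (rule ccontr)
  assume "\<not> (ga = b \<and> gc = b)"
  then have "ga < b \<or> gc < b" using assms by auto
  then have "(1 - u) * ga + u * gc < b"
  proof
    assume "ga < b"
    then have "(1 - u) * ga < (1 - u) * b" using assms by (intro mult_strict_left_mono) auto
    moreover have "u * gc \<le> u * b" using assms by (intro mult_left_mono) auto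
    ultimately show ?thesis by (simp add: algebra_simps)
  next
    assume "gc < b"
    then have "u * gc < u * b" using assms by (intro mult_strict_left_mono) auto
    moreover have "(1 - u) * ga \<le> (1 - u) * b" using assms by (intro mult_left_mono) auto
    ultimately show ?thesis by (simp add: algebra_simps)
  qed
  then show False using assms by simp
qed

lemma convex_hface:
  assumes lin: "\<forall>i\<in>I. linear (g i)" and TI: "T \<subseteq> I"
  shows "convex (hface g b I T)"
  unfolding convex_alt
proof (intro ballI allI impI)
  fix x y and u :: real
  assume x: "x \<in> hface g b I T" and y: "y \<in> hface g b I T" and u: "0 \<le> u \<and> u \<le> 1"
  show "(1 - u) *\<^sub>R x + u *\<^sub>R y \<in> hface g b I T"
    unfolding hface_def
  proof (intro CollectI conjI ballI)
    fix i assume i: "i \<in> I"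
    show "g i ((1 - u) *\<^sub>R x + u *\<^sub>R y) \<le> b i"
      using lin_comb[of "g i"] lin i x y u comb_le[of u "g i x" "b i" "g i y"]
      by (auto simp: hface_def)
  next
    fix i assume i: "i \<in> T"
    then have "i \<in> I" using TI by auto
    then have "g i ((1 - u) *\<^sub>R x + u *\<^sub>R y) = (1 - u) * g i x + u * g i y"
      using lin_comb[of "g i"] lin by auto
    then show "g i ((1 - u) *\<^sub>R x + u *\<^sub>R y) = b i"
      using i x y by (auto simp: hface_def algebra_simps)
  qed
qed

lemma hface_face:
  assumes lin: "\<forall>i\<in>I. linear (g i)" and TI: "T \<subseteq> I"
  shows "hface g b I T face_of hface g b I {}"
  unfolding face_of_def
proof (intro conjI)
  show "hface g b I T \<subseteq> hface g b I {}" by (auto simp: hface_def)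
  show "convex (hface g b I T)" by (rule convex_hface[OF lin TI])
  show "\<forall>a\<in>hface g b I {}. \<forall>c\<in>hface g b I {}. \<forall>x\<in>hface g b I T. x \<in> open_segment a c \<longrightarrow> a \<in> hface g b I T \<and> c \<in> hface g b I T"
  proof (intro ballI impI)
  fix a c x
  assume a: "a \<in> hface g b I {}" and c: "c \<in> hface g b I {}" and x: "x \<in> hface g b I T"
    and seg: "x \<in> open_segment a c"
  obtain u where u: "0 < u" "u < 1" "x = (1 - u) *\<^sub>R a + u *\<^sub>R c"
    using seg by (auto simp: in_segment)
  have key: "g i a = b i \<and> g i c = b i" if i: "i \<in> T" for i
  proof -
    have iI: "i \<in> I" using i TI by auto
    have "g i x = b i" using x i by (auto simp: hface_def)
    then have "(1 - u) * g i a + u * g i c = b i"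
      using lin_comb[of "g i" u a c] lin iI u by auto
    then show ?thesis using comb_eq[of u "g i a" "b i" "g i c"] u a c iI
      by (auto simp: hface_def)
  qed
  show "a \<in> hface g b I T \<and> c \<in> hface g b I T"
    using a c key by (auto simp: hface_def)
  qed
qed

lemma finite_small_eps:
  assumes "finite I" "\<forall>i\<in>I. \<exists>e>0. \<forall>e'. 0 < e' \<and> e' \<le> e \<longrightarrow> P i e'"
  shows "\<exists>e>(0::real). \<forall>i\<in>I. \<forall>e'. 0 < e' \<and> e' \<le> e \<longrightarrow> P i e'"
  using assms
proof (induction I rule: finite_induct)
  case empty
  then show ?case by (auto intro: exI[of _ 1])
next
  case (insert j J)
  then obtain e1 where e1: "e1 > 0" "\<forall>i\<in>J. \<forall>e'. 0 < e' \<and> e' \<le> e1 \<longrightarrow> P i e'" by auto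
  obtain e2 where e2: "e2 > 0" "\<forall>e'. 0 < e' \<and> e' \<le> e2 \<longrightarrow> P j e'" using insert by auto
  show ?case
    using e1 e2 by (intro exI[of _ "min e1 e2"]) auto
qed

lemma face_hface:
  assumes lin: "\<forall>i\<in>I. linear (g i)" and fin: "finite I"
    and F: "F face_of hface g b I {}" and ne: "F \<noteq> {}"
  shows "F = hface g b I {i\<in>I. \<forall>x\<in>F. g i x = b i}"
proof -
  define S where "S = hface g b I {}"
  define Tt where "Tt = {i\<in>I. \<forall>x\<in>F. g i x = b i}"
  have FS: "F \<subseteq> S" using F face_of_imp_subset S_def by blast
  have cF: "convex F" using F face_of_imp_convex by blast
  have step1: "J \<subseteq> I - Tt \<Longrightarrow> \<exists>y\<in>F. \<forall>i\<in>J. g i y < b i" for J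
  proof -
    have "finite J \<Longrightarrow> J \<subseteq> I - Tt \<Longrightarrow> \<exists>y\<in>F. \<forall>i\<in>J. g i y < b i"
    proof (induction J rule: finite_induct)
      case empty
      then show ?case using ne by auto
    next
      case (insert j J)
      then obtain y where y: "y \<in> F" "\<forall>i\<in>J. g i y < b i" by auto
      have jI: "j \<in> I" "j \<notin> Tt" using insert by auto
      then obtain w where w: "w \<in> F" "g j w \<noteq> b j" unfolding Tt_def by auto
      define z where "z = (1/2) *\<^sub>R y + (1/2) *\<^sub>R w"
      have zF: "z \<in> F" unfolding z_def by (rule convexD[OF cF y(1) w(1)]) auto
      have gz: "g i z = (1/2) * g i y + (1/2) * g i w" if "i \<in> I" for i
        using lin that unfolding z_def by (simp add: linear_add linear_scale)
      have yS: "g i y \<le> b i" "g i w \<le> b i" if "i \<in> I" for i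
        using FS y w that by (auto simp: S_def hface_def)
      have "\<forall>i\<in>insert j J. g i z < b i"
      proof
        fix i assume i: "i \<in> insert j J"
        then have iI: "i \<in> I" using insert jI by auto
        show "g i z < b i"
        proof (cases "i = j")
          case True
          then show ?thesis using gz[OF iI] yS[OF iI] w(2) by auto
        next
          case False
          then have "i \<in> J" using i by auto
          then show ?thesis using gz[OF iI] yS[OF iI] y(2) by auto
        qed
      qed
      then show ?case using zF by blast
    qed
    moreover assume "J \<subseteq> I - Tt"
    moreover have "finite J" using calculation(2) fin finite_subset by blast
    ultimately show ?thesis by blast
  qed
  obtain y where yF: "y \<in> F" and ystrict: "\<forall>i\<in>I - Tt. g i y < b i" using step1[of "I - Tt"] by auto
  have yS: "\<forall>i\<in>I. g i y \<le> b i" using yF FS by (auto simp: S_def hface_def)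
  have "hface g b I Tt \<subseteq> F"
  proof
    fix z assume z: "z \<in> hface g b I Tt"
    show "z \<in> F"
    proof (cases "z = y")
      case True then show ?thesis using yF by simp
    next
      case False
      have zS: "\<forall>i\<in>I. g i z \<le> b i" "\<forall>i\<in>Tt. g i z = b i" using z by (auto simp: hface_def)
      have "\<forall>i\<in>I. \<exists>e>0. \<forall>e'. 0 < e' \<and> e' \<le> e \<longrightarrow> g i y + e' * (g i y - g i z) \<le> b i"
      proof
        fix i assume iI: "i \<in> I"
        show "\<exists>e>0. \<forall>e'. 0 < e' \<and> e' \<le> e \<longrightarrow> g i y + e' * (g i y - g i z) \<le> b i"
        proof (cases "g i y \<le> g i z")
          case True
          have "\<forall>e'. 0 < e' \<and> e' \<le> 1 \<longrightarrow> g i y + e' * (g i y - g i z) \<le> b i"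
          proof (intro allI impI)
            fix e' :: real assume "0 < e' \<and> e' \<le> 1"
            then have "e' * (g i y - g i z) \<le> 0" using True by (simp add: mult_nonneg_nonpos)
            then show "g i y + e' * (g i y - g i z) \<le> b i" using yS iI by fastforce
          qed
          then show ?thesis by (intro exI[of _ 1]) auto
        next
          case False
          have "i \<notin> Tt"
          proof
            assume "i \<in> Tt"
            then have "g i z = b i" using zS by auto
            then show False using yS iI False by auto
          qed
          then have lt: "g i y < b i" using ystrict iI by auto
          define e where "e = (b i - g i y) / (g i y - g i z)"
          have dpos: "g i y - g i z > 0" using False by auto
          have epos: "e > 0" unfolding e_def using lt dpos by auto
          have "\<forall>e'. 0 < e' \<and> e' \<le> e \<longrightarrow> g i y + e' * (g i y - g i z) \<le> b i"
          proof (intro allI impI)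
            fix e' :: real assume e': "0 < e' \<and> e' \<le> e"
            have "e' * (g i y - g i z) \<le> e * (g i y - g i z)" using e' dpos by (intro mult_right_mono) auto
            also have "\<dots> = b i - g i y" unfolding e_def using dpos by simp
            finally show "g i y + e' * (g i y - g i z) \<le> b i" by simp
          qed
          then show ?thesis using epos by blast
        qed
      qed
      from finite_small_eps[OF fin this] obtain e where e0: "e > 0"
        and e1: "\<forall>i\<in>I. \<forall>e'. 0 < e' \<and> e' \<le> e \<longrightarrow> g i y + e' * (g i y - g i z) \<le> b i"
        by blast
      have e: "e > 0" "\<forall>i\<in>I. g i y + e * (g i y - g i z) \<le> b i" using e0 e1 by auto
      define w where "w = y + e *\<^sub>R (y - z)"
      have gw: "g i w = g i y + e * (g i y - g i z)" if "i \<in> I" for i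
        using lin that unfolding w_def by (simp add: linear_add linear_scale linear_diff)
      have wS: "w \<in> S" using e gw by (auto simp: S_def hface_def)
      have zS': "z \<in> S" using zS by (auto simp: S_def hface_def)
      define u where "u = 1 / (1 + e)"
      have u: "0 < u" "u < 1" unfolding u_def using e by auto
      have "y = (1 - u) *\<^sub>R z + u *\<^sub>R w"
      proof -
        have "(1 - u) *\<^sub>R z + u *\<^sub>R w = (1 - u - u * e) *\<^sub>R z + (u * (1 + e)) *\<^sub>R y"
          unfolding w_def by (simp add: algebra_simps scaleR_add_right scaleR_diff_right)
        also have "u * (1 + e) = 1" unfolding u_def using e by simp
        also have "1 - u - u * e = 0" using \<open>u * (1 + e) = 1\<close> by (simp add: algebra_simps)
        finally show ?thesis by simp
      qed
      moreover have "z \<noteq> w"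
      proof
        assume "z = w"
        then have "z - y = e *\<^sub>R (y - z)" unfolding w_def by (simp add: algebra_simps)
        then have "(1 + e) *\<^sub>R (z - y) = 0" by (simp add: algebra_simps)
        then show False using e False by simp
      qed
      ultimately have "y \<in> open_segment z w" using u by (auto simp: in_segment)
      then show "z \<in> F" using face_ofD[OF F[folded S_def] _ zS' wS yF] by blast
    qed
  qed
  moreover have "F \<subseteq> hface g b I Tt" using FS by (auto simp: S_def Tt_def hface_def)
  ultimately show ?thesis unfolding Tt_def by blast
qed

definition sL :: "real^('a::finite + 'b::finite) \<Rightarrow> real" where "sL y = (\<Sum>k\<in>UNIV. y $ Inl k)"
definition sR :: "real^('a::finite + 'b::finite) \<Rightarrow> real" where "sR y = (\<Sum>l\<in>UNIV. y $ Inr l)"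

definition pt :: "'a::finite set \<Rightarrow> 'b::finite set \<Rightarrow> real \<Rightarrow> real \<Rightarrow> real^('a + 'b)" where
  "pt A B \<alpha> \<beta> = (\<chi> m. case m of Inl k \<Rightarrow> (if k \<in> A then \<alpha> / card A else 0)
                               | Inr l \<Rightarrow> (if l \<in> B then \<beta> / card B else 0))"

lemma pt_Inl [simp]: "pt A B \<alpha> \<beta> $ Inl k = (if k \<in> A then \<alpha> / card A else 0)"
  by (simp add: pt_def)
lemma pt_Inr [simp]: "pt A B \<alpha> \<beta> $ Inr l = (if l \<in> B then \<beta> / card B else 0)"
  by (simp add: pt_def)

lemma sL_pt: "A \<noteq> {} \<Longrightarrow> sL (pt A B \<alpha> \<beta>) = \<alpha>"
  by (simp add: sL_def sum.If_cases)
lemma sR_pt: "B \<noteq> {} \<Longrightarrow> sR (pt A B \<alpha> \<beta>) = \<beta>"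
  by (simp add: sR_def sum.If_cases)

lemma sL_add [simp]: "sL (x + y) = sL x + sL y" by (simp add: sL_def sum.distrib)
lemma sR_add [simp]: "sR (x + y) = sR x + sR y" by (simp add: sR_def sum.distrib)
lemma sL_scale [simp]: "sL (c *\<^sub>R x) = c * sL x" by (simp add: sL_def sum_distrib_left)
lemma sR_scale [simp]: "sR (c *\<^sub>R x) = c * sR x" by (simp add: sR_def sum_distrib_left)
lemma sL_diff [simp]: "sL (x - y) = sL x - sL y" by (simp add: sL_def sum_subtractf)
lemma sR_diff [simp]: "sR (x - y) = sR x - sR y" by (simp add: sR_def sum_subtractf)
lemma sL_zero [simp]: "sL 0 = 0" by (simp add: sL_def)
lemma sR_zero [simp]: "sR 0 = 0" by (simp add: sR_def)
lemma sL_sum: "sL (sum f S) = (\<Sum>x\<in>S. sL (f x))"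
  by (simp add: sL_def sum.swap[of _ S])
lemma sR_sum: "sR (sum f S) = (\<Sum>x\<in>S. sR (f x))"
  by (simp add: sR_def sum.swap[of _ S])
lemma linear_sL: "linear sL" by (rule linearI) simp_all
lemma linear_sR: "linear sR" by (rule linearI) simp_all

lemma sL_nonneg: "\<forall>m. 0 \<le> y $ m \<Longrightarrow> 0 \<le> sL y" by (simp add: sL_def sum_nonneg)
lemma sR_nonneg: "\<forall>m. 0 \<le> y $ m \<Longrightarrow> 0 \<le> sR y" by (simp add: sR_def sum_nonneg)
lemma sL_zero_iff: "\<forall>m. 0 \<le> y $ m \<Longrightarrow> sL y = 0 \<longleftrightarrow> (\<forall>k. y $ Inl k = 0)"
  by (simp add: sL_def sum_nonneg_eq_0_iff)
lemma sR_zero_iff: "\<forall>m. 0 \<le> y $ m \<Longrightarrow> sR y = 0 \<longleftrightarrow> (\<forall>l. y $ Inr l = 0)"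
  by (simp add: sR_def sum_nonneg_eq_0_iff)

lemma vec_eq_sum_iff: "(x::real^('a::finite + 'b::finite)) = y \<longleftrightarrow> (\<forall>k. x $ Inl k = y $ Inl k) \<and> (\<forall>l. x $ Inr l = y $ Inr l)"
  by (metis sum.exhaust vec_eq_iff)

lemma col_vec_Inl [simp]: "col_vec ka i la j $ Inl k = (if k = ka then real i else 0)"
  by (simp add: col_vec_def)
lemma col_vec_Inr [simp]: "col_vec ka i la j $ Inr l = (if l = la then real j else 0)"
  by (simp add: col_vec_def)
lemma sL_col: "sL (col_vec ka i la j) = real i" by (simp add: sL_def)
lemma sR_col: "sR (col_vec ka i la j) = real j" by (simp add: sR_def)

definition HC :: "nat \<Rightarrow> nat \<Rightarrow> (real^('a::finite + 'b::finite)) set" where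
  "HC e1 e2 = {y. (\<forall>m. 0 \<le> y $ m) \<and> sL y \<le> real e1 * sR y \<and> sR y \<le> real e2 * sL y}"

lemma pos_cone_add: "x \<in> pos_cone a I \<Longrightarrow> y \<in> pos_cone a I \<Longrightarrow> x + y \<in> pos_cone a I"
proof -
  assume "x \<in> pos_cone a I" "y \<in> pos_cone a I"
  then obtain c d where "x = (\<Sum>k\<in>I. c k *\<^sub>R a k)" "\<forall>k\<in>I. 0 \<le> c k"
     "y = (\<Sum>k\<in>I. d k *\<^sub>R a k)" "\<forall>k\<in>I. 0 \<le> d k" by (auto simp: pos_cone_def)
  then show ?thesis unfolding pos_cone_def
    by (intro CollectI exI[of _ "\<lambda>k. c k + d k"]) (auto simp: sum.distrib scaleR_add_left)
qed

lemma pos_cone_scale: "x \<in> pos_cone a I \<Longrightarrow> 0 \<le> r \<Longrightarrow> r *\<^sub>R x \<in> pos_cone a I"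
proof -
  assume "x \<in> pos_cone a I" "0 \<le> r"
  then obtain c where "x = (\<Sum>k\<in>I. c k *\<^sub>R a k)" "\<forall>k\<in>I. 0 \<le> c k" by (auto simp: pos_cone_def)
  then show ?thesis unfolding pos_cone_def using \<open>0 \<le> r\<close>
    by (intro CollectI exI[of _ "\<lambda>k. r * c k"]) (auto simp: scaleR_sum_right)
qed

lemma pos_cone_zero: "0 \<in> pos_cone a I"
  unfolding pos_cone_def by (intro CollectI exI[of _ "\<lambda>k. 0"]) auto

lemma pos_cone_gen: "finite I \<Longrightarrow> k \<in> I \<Longrightarrow> a k \<in> pos_cone a I"
proof -
  assume fin: "finite I" and k: "k \<in> I"
  have "\<And>k'. (if k' = k then 1 else 0) *\<^sub>R a k' = (if k' = k then a k else 0)" by simp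
  then have "(\<Sum>k'\<in>I. (if k' = k then 1 else 0) *\<^sub>R a k') = a k" using fin k by (simp add: sum.delta')
  then show ?thesis unfolding pos_cone_def
    by (intro CollectI exI[of _ "\<lambda>k'. if k' = k then 1 else 0"]) auto
qed

lemma pos_cone_sum: "finite S \<Longrightarrow> (\<And>x. x \<in> S \<Longrightarrow> f x \<in> pos_cone a I) \<Longrightarrow> sum f S \<in> pos_cone a I"
  by (induction S rule: finite_induct) (auto intro: pos_cone_add pos_cone_zero)

lemma sum_if_cond_out: "(\<Sum>x\<in>S. if P then f x else 0) = (if P then sum f S else 0)"
  by simp

lemma HC_scale: "y \<in> HC e1 e2 \<Longrightarrow> 0 \<le> c \<Longrightarrow> c *\<^sub>R y \<in> HC e1 e2"
  by (auto simp: HC_def mult_left_mono mult.left_commute)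

lemma HC_zero: "0 \<in> HC e1 e2" by (simp add: HC_def)

lemma HC_sL_zero:
  assumes "y \<in> HC e1 e2" "sL y = 0" shows "y = 0"
proof -
  have nn: "\<forall>m. 0 \<le> y $ m" using assms by (auto simp: HC_def)
  have "sR y \<le> 0" using assms by (auto simp: HC_def)
  then have "sR y = 0" using sR_nonneg[OF nn] by auto
  then show ?thesis using assms sL_zero_iff[OF nn] sR_zero_iff[OF nn] by (auto simp: vec_eq_sum_iff)
qed

lemma HC_sR_zero:
  assumes "y \<in> HC e1 e2" "sR y = 0" shows "y = 0"
proof -
  have nn: "\<forall>m. 0 \<le> y $ m" using assms by (auto simp: HC_def)
  have "sL y \<le> 0" using assms by (auto simp: HC_def)
  then have "sL y = 0" using sL_nonneg[OF nn] by auto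
  then show ?thesis using assms HC_sL_zero by blast
qed

lemma cone_eq_HC:
  fixes e1 e2 :: nat
  assumes e1: "e1 \<ge> 2" and e2: "e2 \<ge> 2"
  shows "pos_cone (\<lambda>(ka::'a::finite, i, la::'b::finite, j). col_vec ka i la j)
                 {(ka, i, la, j). i \<in> {1..e1} \<and> j \<in> {1..e2}} = HC e1 e2"
    (is "pos_cone ?a ?I = _")
proof
  have finI: "finite ?I"
  proof -
    have "?I = UNIV \<times> {1..e1} \<times> UNIV \<times> {1..e2}" by auto
    then show ?thesis by simp
  qed
  show "HC e1 e2 \<subseteq> pos_cone ?a ?I"
  proof
    fix y :: "real^('a+'b)" assume y: "y \<in> HC e1 e2"
    show "y \<in> pos_cone ?a ?I"
    proof (cases "sL y = 0")
      case True
      then show ?thesis using HC_sL_zero[OF y] pos_cone_zero by simp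
    next
      case False
      have nn: "\<forall>m. 0 \<le> y $ m" and i1: "sL y \<le> e1 * sR y" and i2: "sR y \<le> e2 * sL y"
        using y by (auto simp: HC_def)
      define s where "s = sL y"
      define t where "t = sR y"
      have s: "s > 0" using False sL_nonneg[OF nn] s_def by auto
      have t: "t > 0" using False HC_sR_zero[OF y] t_def s_def by (metis less_eq_real_def sR_nonneg[OF nn] sL_zero)
      define D where "D = real e1 * real e2 - 1"
      have D: "D > 0" unfolding D_def using e1 e2
        by (metis (mono_tags) diff_gt_0_iff_gt less_1_mult numeral_le_real_of_nat_iff one_less_numeral_iff one_less_of_natD order_less_le_trans semiring_norm(76))
      define \<alpha> where "\<alpha> = (e2 * s - t) / D"
      define \<beta> where "\<beta> = (e1 * t - s) / D"
      have \<alpha>: "\<alpha> \<ge> 0" unfolding \<alpha>_def using i2 D s_def t_def by auto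
      have \<beta>: "\<beta> \<ge> 0" unfolding \<beta>_def using i1 D s_def t_def by auto
      have ab1: "\<alpha> * e1 + \<beta> = s"
      proof -
        have "\<alpha> * e1 + \<beta> = ((e2 * s - t) * e1 + (e1 * t - s)) / D" unfolding \<alpha>_def \<beta>_def using D
          by (simp add: field_simps)
        also have "(e2 * s - t) * e1 + (e1 * t - s) = s * D" unfolding D_def by (simp add: algebra_simps)
        finally show ?thesis using D by simp
      qed
      have ab2: "\<alpha> + \<beta> * e2 = t"
      proof -
        have "\<alpha> + \<beta> * e2 = ((e2 * s - t) + (e1 * t - s) * e2) / D" unfolding \<alpha>_def \<beta>_def using D
          by (simp add: field_simps)
        also have "(e2 * s - t) + (e1 * t - s) * e2 = t * D" unfolding D_def by (simp add: algebra_simps)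
        finally show ?thesis using D by simp
      qed
      define w where "w k l = y $ Inl k * y $ Inr l / (s * t)" for k l
      define f where "f k l = w k l *\<^sub>R (\<alpha> *\<^sub>R col_vec k e1 l 1 + \<beta> *\<^sub>R col_vec k 1 l e2)" for k l
      have "(\<Sum>k\<in>UNIV. \<Sum>l\<in>UNIV. f k l) \<in> pos_cone ?a ?I"
      proof (intro pos_cone_sum)
        fix k l
        have g1: "col_vec k e1 l 1 \<in> pos_cone ?a ?I"
          using pos_cone_gen[OF finI, of "(k, e1, l, 1)" ?a] e1 e2 by auto
        have g2: "col_vec k 1 l e2 \<in> pos_cone ?a ?I"
          using pos_cone_gen[OF finI, of "(k, 1, l, e2)" ?a] e1 e2 by auto
        have "w k l \<ge> 0" unfolding w_def using nn s t by auto
        then show "f k l \<in> pos_cone ?a ?I" unfolding f_def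
          using g1 g2 \<alpha> \<beta> by (intro pos_cone_scale pos_cone_add) auto
      qed auto
      moreover have "(\<Sum>k\<in>UNIV. \<Sum>l\<in>UNIV. f k l) = y"
      proof (subst vec_eq_sum_iff, intro conjI allI)
        fix k0
        have "(\<Sum>k\<in>UNIV. \<Sum>l\<in>UNIV. f k l) $ Inl k0 = (\<Sum>l\<in>UNIV. w k0 l * (\<alpha> * e1 + \<beta>))"
          by (simp add: f_def if_distrib sum_if_cond_out cong: if_cong)
        also have "\<dots> = (\<Sum>l\<in>UNIV. (y $ Inl k0 / (s * t) * (\<alpha> * e1 + \<beta>)) * y $ Inr l)"
          by (rule sum.cong) (simp_all add: w_def)
        also have "\<dots> = y $ Inl k0 / (s * t) * (\<alpha> * e1 + \<beta>) * (\<Sum>l\<in>UNIV. y $ Inr l)"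
          by (rule sum_distrib_left[symmetric])
        also have "\<dots> = y $ Inl k0"
        proof -
          have "(\<Sum>l\<in>UNIV. y $ Inr l) = t" by (simp add: t_def sR_def)
          then have "y $ Inl k0 / (s * t) * (\<alpha> * e1 + \<beta>) * (\<Sum>l\<in>UNIV. y $ Inr l) = y $ Inl k0 / (s * t) * s * t"
            by (simp only: ab1)
          also have "\<dots> = y $ Inl k0" using s t by simp
          finally show ?thesis .
        qed
        finally show "(\<Sum>k\<in>UNIV. \<Sum>l\<in>UNIV. f k l) $ Inl k0 = y $ Inl k0" .
      next
        fix l0
        have "(\<Sum>k\<in>UNIV. \<Sum>l\<in>UNIV. f k l) $ Inr l0 = (\<Sum>k\<in>UNIV. w k l0 * (\<alpha> + \<beta> * e2))"
          by (simp add: f_def if_distrib cong: if_cong)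
        also have "\<dots> = (\<Sum>k\<in>UNIV. (y $ Inr l0 / (s * t) * (\<alpha> + \<beta> * e2)) * y $ Inl k)"
          by (rule sum.cong) (simp_all add: w_def)
        also have "\<dots> = y $ Inr l0 / (s * t) * (\<alpha> + \<beta> * e2) * (\<Sum>k\<in>UNIV. y $ Inl k)"
          by (rule sum_distrib_left[symmetric])
        also have "\<dots> = y $ Inr l0"
        proof -
          have "(\<Sum>k\<in>UNIV. y $ Inl k) = s" by (simp add: s_def sL_def)
          then have "y $ Inr l0 / (s * t) * (\<alpha> + \<beta> * e2) * (\<Sum>k\<in>UNIV. y $ Inl k) = y $ Inr l0 / (s * t) * t * s"
            by (simp only: ab2)
          also have "\<dots> = y $ Inr l0" using s t by simp
          finally show ?thesis .
        qed
        finally show "(\<Sum>k\<in>UNIV. \<Sum>l\<in>UNIV. f k l) $ Inr l0 = y $ Inr l0" .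
      qed
      ultimately show ?thesis by simp
    qed
  qed
  show "pos_cone ?a ?I \<subseteq> HC e1 e2"
  proof
    fix x assume "x \<in> pos_cone ?a ?I"
    then obtain c where x: "x = (\<Sum>k\<in>?I. c k *\<^sub>R ?a k)" and c: "\<forall>k\<in>?I. 0 \<le> c k"
      by (auto simp: pos_cone_def)
    have nn: "\<forall>m. 0 \<le> x $ m"
    proof
      fix m
      show "0 \<le> x $ m" unfolding x sum_component
      proof (intro sum_nonneg)
        fix k assume k: "k \<in> ?I"
        obtain ka i la j where "k = (ka, i, la, j)" by (cases k) auto
        then show "0 \<le> (c k *\<^sub>R ?a k) $ m" using c k
          by (cases m) (auto simp: col_vec_def)
      qed
    qed
    have "sL x = (\<Sum>k\<in>?I. c k * sL (?a k))" unfolding x sL_sum by simp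
    also have "\<dots> \<le> (\<Sum>k\<in>?I. c k * (e1 * sR (?a k)))"
    proof (intro sum_mono)
      fix k assume k: "k \<in> ?I"
      obtain ka i la j where kk: "k = (ka, i, la, j)" by (cases k) auto
      then have h1: "i \<le> e1" "1 \<le> j" using k by auto
      then have "e1 \<le> e1 * j" using mult_le_mono2[of 1 j e1] by simp
      then have "i \<le> e1 * j" using h1 by linarith
      then have "real i \<le> real e1 * real j" by (metis of_nat_le_iff of_nat_mult)
      then show "c k * sL (?a k) \<le> c k * (e1 * sR (?a k))" using c k kk
        by (auto simp: sL_col sR_col intro: mult_left_mono)
    qed
    also have "\<dots> = e1 * sR x" unfolding x sR_sum by (simp add: sum_distrib_left mult_ac)
    finally have i1: "sL x \<le> e1 * sR x" .
    have "sR x = (\<Sum>k\<in>?I. c k * sR (?a k))" unfolding x sR_sum by simp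
    also have "\<dots> \<le> (\<Sum>k\<in>?I. c k * (e2 * sL (?a k)))"
    proof (intro sum_mono)
      fix k assume k: "k \<in> ?I"
      obtain ka i la j where kk: "k = (ka, i, la, j)" by (cases k) auto
      then have h1: "j \<le> e2" "1 \<le> i" using k by auto
      then have "e2 \<le> e2 * i" using mult_le_mono2[of 1 i e2] by simp
      then have "j \<le> e2 * i" using h1 by linarith
      then have "real j \<le> real e2 * real i" by (metis of_nat_le_iff of_nat_mult)
      then show "c k * sR (?a k) \<le> c k * (e2 * sL (?a k))" using c k kk
        by (auto simp: sL_col sR_col intro: mult_left_mono)
    qed
    also have "\<dots> = e2 * sL x" unfolding x sL_sum by (simp add: sum_distrib_left mult_ac)
    finally have i2: "sR x \<le> e2 * sL x" .
    show "x \<in> HC e1 e2" using nn i1 i2 by (simp add: HC_def)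
  qed
qed

definition PhiC :: "nat \<Rightarrow> nat \<Rightarrow> 'a::finite set \<Rightarrow> 'b::finite set \<Rightarrow> 2 set \<Rightarrow> (real^('a + 'b)) set" where
  "PhiC e1 e2 A B X = {y \<in> HC e1 e2. (\<forall>k. k \<notin> A \<longrightarrow> y $ Inl k = 0) \<and> (\<forall>l. l \<notin> B \<longrightarrow> y $ Inr l = 0)
      \<and> (1 \<notin> X \<longrightarrow> sR y = e2 * sL y) \<and> (2 \<notin> X \<longrightarrow> sL y = e1 * sR y)}"

definition PhiP :: "nat \<Rightarrow> nat \<Rightarrow> 'a::finite set \<Rightarrow> 'b::finite set \<Rightarrow> 2 set \<Rightarrow> (real^('a + 'b)) set" where
  "PhiP e1 e2 A B X = PhiC e1 e2 A B X \<inter> {y. sL y + sR y = 1}"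

definition vtx :: "nat \<Rightarrow> nat \<Rightarrow> 'a::finite \<Rightarrow> 'b::finite \<Rightarrow> 2 \<Rightarrow> real^('a + 'b)" where
  "vtx e1 e2 k l x = (if x = 1 then (1 / (e1 + 1)) *\<^sub>R col_vec k e1 l 1 else (1 / (1 + e2)) *\<^sub>R col_vec k 1 l e2)"

lemma e12_ne1: "e1 \<ge> 2 \<Longrightarrow> e2 \<ge> 2 \<Longrightarrow> real e1 * real e2 \<noteq> 1"
proof -
  assume "e1 \<ge> 2" "e2 \<ge> 2"
  then have "real e1 \<ge> 2" "real e2 \<ge> 2" by auto
  then have "real e1 * real e2 \<ge> 2 * 2" by (intro mult_mono) auto
  then show ?thesis by auto
qed

lemma PhiC_triv:
  assumes e: "e1 \<ge> 2" "e2 \<ge> 2" and t: "A = {} \<or> B = {} \<or> X = {}"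
  shows "PhiC e1 e2 A B X = {0}"
proof
  show "{0} \<subseteq> PhiC e1 e2 A B X" by (simp add: PhiC_def HC_zero)
  show "PhiC e1 e2 A B X \<subseteq> {0}"
  proof
    fix y assume y: "y \<in> PhiC e1 e2 A B X"
    then have yH: "y \<in> HC e1 e2" by (simp add: PhiC_def)
    from t consider "A = {}" | "B = {}" | "X = {}" by blast
    then have "y = 0"
    proof cases
      case 1
      then have "\<forall>k. y $ Inl k = 0" using y unfolding PhiC_def by blast
      then have "sL y = 0" by (simp add: sL_def)
      then show ?thesis using HC_sL_zero[OF yH] by blast
    next
      case 2
      then have "\<forall>l. y $ Inr l = 0" using y unfolding PhiC_def by blast
      then have "sR y = 0" by (simp add: sR_def)
      then show ?thesis using HC_sR_zero[OF yH] by simp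
    next
      case 3
      have h2: "sR y = e2 * sL y" and h1: "sL y = e1 * sR y" using y 3 unfolding PhiC_def by blast+
      have h: "sL y = e1 * (e2 * sL y)" by (rule h1[unfolded h2])
      have "sL y * (real e1 * real e2 - 1) = e1 * (e2 * sL y) - sL y" by (simp add: algebra_simps)
      also have "\<dots> = 0" using h by linarith
      finally have "sL y * (real e1 * real e2 - 1) = 0" .
      then have "sL y = 0" using e12_ne1[OF e] by simp
      then show ?thesis using HC_sL_zero[OF yH] by simp
    qed
    then show "y \<in> {0}" by simp
  qed
qed

lemma PhiP_triv:
  assumes e: "e1 \<ge> 2" "e2 \<ge> 2" and t: "A = {} \<or> B = {} \<or> X = {}"
  shows "PhiP e1 e2 A B X = {}"
  using PhiC_triv[OF e t] by (auto simp: PhiP_def)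

lemma PhiC_mono: "A \<subseteq> A' \<Longrightarrow> B \<subseteq> B' \<Longrightarrow> X \<subseteq> X' \<Longrightarrow> PhiC e1 e2 A B X \<subseteq> PhiC e1 e2 A' B' X'"
  by (auto simp: PhiC_def)
lemma PhiP_mono: "A \<subseteq> A' \<Longrightarrow> B \<subseteq> B' \<Longrightarrow> X \<subseteq> X' \<Longrightarrow> PhiP e1 e2 A B X \<subseteq> PhiP e1 e2 A' B' X'"
  using PhiC_mono[of A A' B B' X X' e1 e2] by (auto simp: PhiP_def)

lemma PhiC_scale: "y \<in> PhiC e1 e2 A B X \<Longrightarrow> 0 \<le> c \<Longrightarrow> c *\<^sub>R y \<in> PhiC e1 e2 A B X"
  unfolding PhiC_def using HC_scale[of y e1 e2 c] by (simp add: mult.left_commute)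

lemma vtx_mem:
  assumes e: "e1 \<ge> 2" "e2 \<ge> 2"
  shows "vtx e1 e2 k l x \<in> PhiP e1 e2 A B X \<longleftrightarrow> k \<in> A \<and> l \<in> B \<and> x \<in> X"
proof -
  have ne: "real e1 * real e2 \<noteq> 1" using e12_ne1[OF e] .
  have e1p: "real e1 + 1 > 0" "real e2 + 1 > 0" by auto
  consider "x = 1" | "x = 2" using exhaust_2 by blast
  then show ?thesis
  proof cases
    case 1
    let ?y = "(1 / (e1 + 1)) *\<^sub>R col_vec k e1 l 1"
    have v: "vtx e1 e2 k l x = ?y" using 1 by (simp add: vtx_def)
    have sl: "sL ?y = e1 / (e1 + 1)" and sr: "sR ?y = 1 / (e1 + 1)" by (simp_all add: sL_col sR_col)
    have nn: "\<forall>m. 0 \<le> ?y $ m" by (auto simp: col_vec_def split: sum.splits)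
    have ineq1: "sL ?y \<le> e1 * sR ?y" using sl sr by simp
    have ineq2: "sR ?y \<le> e2 * sL ?y"
    proof -
      have "1 \<le> real e2 * real e1" using e mult_mono[of 1 "real e2" 1 "real e1"] by auto
      then have "1 / (e1 + 1) \<le> (real e2 * real e1) / (e1 + 1)" using e1p by (intro divide_right_mono) auto
      then show ?thesis unfolding sl sr by simp
    qed
    have neq: "sR ?y \<noteq> e2 * sL ?y"
    proof
      assume "sR ?y = e2 * sL ?y"
      then have "1 / (e1 + 1) = e2 * (e1 / (e1 + 1))" using sl sr by simp
      then have "1 = real e2 * real e1" using e1p by (simp add: field_simps)
      then show False using ne by (simp add: mult.commute)
    qed
    have eq: "sL ?y = e1 * sR ?y" using sl sr by simp
    have ck: "?y $ Inl k \<noteq> 0" using e by simp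
    have cl: "?y $ Inr l \<noteq> 0" by simp
    have s1: "sL ?y + sR ?y = 1" unfolding sl sr using e1p by (simp add: field_simps)
    have m: "?y \<in> PhiP e1 e2 A B X \<longleftrightarrow> (\<forall>k'. k' \<notin> A \<longrightarrow> ?y $ Inl k' = 0) \<and> (\<forall>l'. l' \<notin> B \<longrightarrow> ?y $ Inr l' = 0)
      \<and> (1 \<notin> X \<longrightarrow> sR ?y = e2 * sL ?y) \<and> (2 \<notin> X \<longrightarrow> sL ?y = e1 * sR ?y)"
      using nn ineq1 ineq2 s1 by (simp add: PhiP_def PhiC_def HC_def)
    have mA: "(\<forall>k'. k' \<notin> A \<longrightarrow> ?y $ Inl k' = 0) \<longleftrightarrow> k \<in> A"
    proof
      assume "\<forall>k'. k' \<notin> A \<longrightarrow> ?y $ Inl k' = 0" then show "k \<in> A" using ck by blast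
    next
      assume "k \<in> A" then show "\<forall>k'. k' \<notin> A \<longrightarrow> ?y $ Inl k' = 0" by auto
    qed
    have mB: "(\<forall>l'. l' \<notin> B \<longrightarrow> ?y $ Inr l' = 0) \<longleftrightarrow> l \<in> B"
    proof
      assume "\<forall>l'. l' \<notin> B \<longrightarrow> ?y $ Inr l' = 0" then show "l \<in> B" using cl by blast
    next
      assume "l \<in> B" then show "\<forall>l'. l' \<notin> B \<longrightarrow> ?y $ Inr l' = 0" by auto
    qed
    have o12: "(1::2) \<noteq> 2" by simp
    show ?thesis unfolding v m mA mB using neq eq 1 o12 by auto
  next
    case 2
    let ?y = "(1 / (1 + e2)) *\<^sub>R col_vec k 1 l e2"
    have v: "vtx e1 e2 k l x = ?y" using 2 by (simp add: vtx_def)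
    have sl: "sL ?y = 1 / (1 + e2)" and sr: "sR ?y = e2 / (1 + e2)" by (simp_all add: sL_col sR_col)
    have nn: "\<forall>m. 0 \<le> ?y $ m" by (auto simp: col_vec_def split: sum.splits)
    have ineq2: "sR ?y \<le> e2 * sL ?y" using sl sr by simp
    have ineq1: "sL ?y \<le> e1 * sR ?y"
    proof -
      have "1 \<le> real e1 * real e2" using e mult_mono[of 1 "real e1" 1 "real e2"] by auto
      then have "1 / (1 + e2) \<le> (real e1 * real e2) / (1 + e2)" using e1p by (intro divide_right_mono) auto
      then show ?thesis unfolding sl sr by simp
    qed
    have neq: "sL ?y \<noteq> e1 * sR ?y"
    proof
      assume "sL ?y = e1 * sR ?y"
      then have "1 / (1 + e2) = e1 * (e2 / (1 + e2))" using sl sr by simp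
      then have "1 = real e1 * real e2" using e1p by (simp add: field_simps)
      then show False using ne by simp
    qed
    have eq: "sR ?y = e2 * sL ?y" using sl sr by simp
    have ck: "?y $ Inl k \<noteq> 0" by simp
    have cl: "?y $ Inr l \<noteq> 0" using e by simp
    have s1: "sL ?y + sR ?y = 1" unfolding sl sr using e1p by (simp add: field_simps)
    have m: "?y \<in> PhiP e1 e2 A B X \<longleftrightarrow> (\<forall>k'. k' \<notin> A \<longrightarrow> ?y $ Inl k' = 0) \<and> (\<forall>l'. l' \<notin> B \<longrightarrow> ?y $ Inr l' = 0)
      \<and> (1 \<notin> X \<longrightarrow> sR ?y = e2 * sL ?y) \<and> (2 \<notin> X \<longrightarrow> sL ?y = e1 * sR ?y)"
      using nn ineq1 ineq2 s1 by (simp add: PhiP_def PhiC_def HC_def)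
    have mA: "(\<forall>k'. k' \<notin> A \<longrightarrow> ?y $ Inl k' = 0) \<longleftrightarrow> k \<in> A"
    proof
      assume "\<forall>k'. k' \<notin> A \<longrightarrow> ?y $ Inl k' = 0" then show "k \<in> A" using ck by blast
    next
      assume "k \<in> A" then show "\<forall>k'. k' \<notin> A \<longrightarrow> ?y $ Inl k' = 0" by auto
    qed
    have mB: "(\<forall>l'. l' \<notin> B \<longrightarrow> ?y $ Inr l' = 0) \<longleftrightarrow> l \<in> B"
    proof
      assume "\<forall>l'. l' \<notin> B \<longrightarrow> ?y $ Inr l' = 0" then show "l \<in> B" using cl by blast
    next
      assume "l \<in> B" then show "\<forall>l'. l' \<notin> B \<longrightarrow> ?y $ Inr l' = 0" by auto
    qed
    have o12: "(1::2) \<noteq> 2" by simp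
    show ?thesis unfolding v m mA mB using neq eq 2 o12 by auto
  qed
qed

definition gC :: "nat \<Rightarrow> nat \<Rightarrow> (('a::finite + 'b::finite) + nat) \<Rightarrow> real^('a + 'b) \<Rightarrow> real" where
  "gC e1 e2 i y = (case i of Inl m \<Rightarrow> - (y $ m)
     | Inr n \<Rightarrow> (if n = 0 then sL y - e1 * sR y else if n = 1 then sR y - e2 * sL y
                 else if n = 2 then sL y + sR y else - (sL y + sR y)))"

definition bC :: "(('a::finite + 'b::finite) + nat) \<Rightarrow> real" where
  "bC i = (case i of Inl m \<Rightarrow> 0 | Inr n \<Rightarrow> (if n = 2 then 1 else if n = 3 then -1 else 0))"

definition IC :: "(('a::finite + 'b::finite) + nat) set" where "IC = range Inl \<union> Inr ` {0, 1}"
definition IP :: "(('a::finite + 'b::finite) + nat) set" where "IP = range Inl \<union> Inr ` {0, 1, 2, 3}"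

definition P0 :: "nat \<Rightarrow> nat \<Rightarrow> (real^('a::finite + 'b::finite)) set" where
  "P0 e1 e2 = HC e1 e2 \<inter> {y. sL y + sR y = 1}"

definition trA :: "(('a::finite + 'b::finite) + nat) set \<Rightarrow> 'a set" where "trA T = {k. Inl (Inl k) \<notin> T}"
definition trB :: "(('a::finite + 'b::finite) + nat) set \<Rightarrow> 'b set" where "trB T = {l. Inl (Inr l) \<notin> T}"
definition trX :: "(('a::finite + 'b::finite) + nat) set \<Rightarrow> 2 set" where
  "trX T = {x. (x = 1 \<and> Inr 1 \<notin> T) \<or> (x = 2 \<and> Inr 0 \<notin> T)}"
definition TofC :: "'a::finite set \<Rightarrow> 'b::finite set \<Rightarrow> 2 set \<Rightarrow> (('a + 'b) + nat) set" where
  "TofC A B X = Inl ` (Inl ` (- A) \<union> Inr ` (- B)) \<union> Inr ` ({n. n = 1 \<and> 1 \<notin> X} \<union> {n. n = 0 \<and> 2 \<notin> X})"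

lemma one_neq_two_2 [simp]: "(1::2) \<noteq> 2" "(2::2) \<noteq> 1" by simp_all

lemma trX_1 [simp]: "1 \<in> trX T \<longleftrightarrow> Inr 1 \<notin> T" by (simp add: trX_def)
lemma trX_2 [simp]: "2 \<in> trX T \<longleftrightarrow> Inr 0 \<notin> T" by (simp add: trX_def)
lemma trA_iff [simp]: "k \<in> trA T \<longleftrightarrow> Inl (Inl k) \<notin> T" by (simp add: trA_def)
lemma trB_iff [simp]: "l \<in> trB T \<longleftrightarrow> Inl (Inr l) \<notin> T" by (simp add: trB_def)

lemma TofC_Inl_Inl [simp]: "Inl (Inl k) \<in> TofC A B X \<longleftrightarrow> k \<notin> A"
  unfolding TofC_def by (auto simp: image_iff)
lemma TofC_Inl_Inr [simp]: "Inl (Inr l) \<in> TofC A B X \<longleftrightarrow> l \<notin> B"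
  unfolding TofC_def by (auto simp: image_iff)
lemma TofC_Inr [simp]: "Inr n \<in> TofC A B X \<longleftrightarrow> (n = 1 \<and> 1 \<notin> X) \<or> (n = 0 \<and> 2 \<notin> X)"
  unfolding TofC_def by (auto simp: image_iff)

lemma trA_Tof: "trA (TofC A B X) = A" by auto
lemma trB_Tof: "trB (TofC A B X) = B" by auto
lemma trX_Tof: "trX (TofC A B X) = X"
proof -
  have "x \<in> trX (TofC A B X) \<longleftrightarrow> x \<in> X" for x
    using exhaust_2[of x] by auto
  then show ?thesis by blast
qed
lemma TofC_IC: "TofC A B X \<subseteq> IC" by (auto simp: TofC_def IC_def)
lemma TofC_IP: "TofC A B X \<subseteq> IP" by (auto simp: TofC_def IP_def)

lemma lin_gC: "linear (gC e1 e2 i)"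
proof (rule linearI)
  fix x y :: "real^('a::finite + 'b::finite)" and c :: real
  show "gC e1 e2 i (x + y) = gC e1 e2 i x + gC e1 e2 i y"
    by (cases i) (auto simp: gC_def algebra_simps)
  show "gC e1 e2 i (c *\<^sub>R x) = c *\<^sub>R gC e1 e2 i x"
    by (cases i) (auto simp: gC_def algebra_simps)
qed

lemma hface_IC_iff:
  "y \<in> hface (gC e1 e2) bC IC T \<longleftrightarrow> (\<forall>m. 0 \<le> y $ m) \<and> sL y \<le> e1 * sR y \<and> sR y \<le> e2 * sL y
     \<and> (\<forall>i\<in>T. gC e1 e2 i y = bC i)"
  by (auto simp: hface_def IC_def gC_def bC_def)

lemma hface_IP_iff:
  "y \<in> hface (gC e1 e2) bC IP T \<longleftrightarrow> (\<forall>m. 0 \<le> y $ m) \<and> sL y \<le> e1 * sR y \<and> sR y \<le> e2 * sL y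
     \<and> sL y + sR y = 1 \<and> (\<forall>i\<in>T. gC e1 e2 i y = bC i)"
  by (auto simp: hface_def IP_def gC_def bC_def)

lemma T_iff:
  assumes "T \<subseteq> IP"
  shows "(\<forall>i\<in>T. gC e1 e2 i y = bC i) \<longleftrightarrow>
     (\<forall>k. Inl (Inl k) \<in> T \<longrightarrow> y $ Inl k = 0) \<and> (\<forall>l. Inl (Inr l) \<in> T \<longrightarrow> y $ Inr l = 0)
     \<and> (Inr 0 \<in> T \<longrightarrow> sL y - e1 * sR y = 0) \<and> (Inr 1 \<in> T \<longrightarrow> sR y - e2 * sL y = 0)
     \<and> (Inr 2 \<in> T \<longrightarrow> sL y + sR y = 1) \<and> (Inr 3 \<in> T \<longrightarrow> sL y + sR y = 1)"
    (is "?L \<longleftrightarrow> ?R")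
proof
  assume L: ?L
  show ?R
  proof (intro conjI allI impI)
    fix k assume "Inl (Inl k) \<in> T" then show "y $ Inl k = 0" using L by (force simp: gC_def bC_def)
  next
    fix l assume "Inl (Inr l) \<in> T" then show "y $ Inr l = 0" using L by (force simp: gC_def bC_def)
  next
    assume "Inr 0 \<in> T" then show "sL y - e1 * sR y = 0" using L by (force simp: gC_def bC_def)
  next
    assume "Inr 1 \<in> T" then show "sR y - e2 * sL y = 0" using L by (force simp: gC_def bC_def)
  next
    assume "Inr 2 \<in> T" then show "sL y + sR y = 1" using L by (force simp: gC_def bC_def)
  next
    assume "Inr 3 \<in> T" then have "gC e1 e2 (Inr 3) y = bC (Inr 3 :: ('a + 'b) + nat)" using L by blast
    then show "sL y + sR y = 1" by (simp add: gC_def bC_def)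
  qed
next
  assume R: ?R
  show ?L
  proof
    fix i assume i: "i \<in> T"
    then have "i \<in> IP" using assms by auto
    then consider m where "i = Inl m" | "i = Inr 0" | "i = Inr 1" | "i = Inr 2" | "i = Inr 3"
      unfolding IP_def by blast
    then show "gC e1 e2 i y = bC i"
    proof cases
      case (1 m)
      then show ?thesis using R i by (cases m) (auto simp: gC_def bC_def)
    next
      case 2 then show ?thesis using R i by (simp add: gC_def bC_def)
    next
      case 3 then show ?thesis using R i by (simp add: gC_def bC_def)
    next
      case 4 then show ?thesis using R i by (simp add: gC_def bC_def)
    next
      case 5 then show ?thesis using R i by (simp add: gC_def bC_def)
    qed
  qed
qed

lemma IC_IP: "IC \<subseteq> IP" by (auto simp: IC_def IP_def)
lemma finite_IC: "finite (IC :: (('a::finite + 'b::finite) + nat) set)" by (simp add: IC_def)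
lemma finite_IP: "finite (IP :: (('a::finite + 'b::finite) + nat) set)" by (simp add: IP_def)

lemma hface_IC_PhiC:
  assumes T: "T \<subseteq> IC"
  shows "hface (gC e1 e2) bC IC T = PhiC e1 e2 (trA T) (trB T) (trX T)"
proof -
  have TP: "T \<subseteq> IP" using T IC_IP by blast
  have n23: "Inr 2 \<notin> T" "Inr 3 \<notin> T" using T by (auto simp: IC_def)
  show ?thesis
    unfolding set_eq_iff hface_IC_iff T_iff[OF TP] PhiC_def HC_def
    using n23 by auto
qed

lemma hface_IP_PhiP:
  assumes T: "T \<subseteq> IP"
  shows "hface (gC e1 e2) bC IP T = PhiP e1 e2 (trA T) (trB T) (trX T)"
  unfolding set_eq_iff hface_IP_iff T_iff[OF T] PhiP_def PhiC_def HC_def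
  by auto

lemma PhiC_hface: "PhiC e1 e2 A B X = hface (gC e1 e2) bC IC (TofC A B X)"
  using hface_IC_PhiC[OF TofC_IC, of e1 e2 A B X] by (simp add: trA_Tof trB_Tof trX_Tof)

lemma PhiP_hface: "PhiP e1 e2 A B X = hface (gC e1 e2) bC IP (TofC A B X)"
  using hface_IP_PhiP[OF TofC_IP, of e1 e2 A B X] by (simp add: trA_Tof trB_Tof trX_Tof)

lemma HC_hface: "HC e1 e2 = hface (gC e1 e2) bC IC {}"
  unfolding set_eq_iff hface_IC_iff HC_def by auto

lemma P0_hface: "P0 e1 e2 = hface (gC e1 e2) bC IP {}"
  unfolding set_eq_iff hface_IP_iff P0_def HC_def by auto

lemma faces_HC:
  assumes e: "e1 \<ge> 2" "e2 \<ge> 2"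
  shows "{F. F face_of HC e1 e2} = insert {} (range (\<lambda>(A, B, X). PhiC e1 e2 A B X))"
proof
  have l: "\<forall>i\<in>IC. linear (gC e1 e2 i)" using lin_gC by blast
  show "{F. F face_of HC e1 e2} \<subseteq> insert {} (range (\<lambda>(A, B, X). PhiC e1 e2 A B X))"
  proof
    fix F assume F: "F \<in> {F. F face_of HC e1 e2}"
    show "F \<in> insert {} (range (\<lambda>(A, B, X). PhiC e1 e2 A B X))"
    proof (cases "F = {}")
      case False
      let ?T = "{i \<in> IC. \<forall>x\<in>F. gC e1 e2 i x = bC i}"
      have "F = hface (gC e1 e2) bC IC ?T"
      proof (rule face_hface[OF l finite_IC])
        show "F face_of hface (gC e1 e2) bC IC {}" using F by (simp add: HC_hface)
        show "F \<noteq> {}" by fact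
      qed
      also have "\<dots> = PhiC e1 e2 (trA ?T) (trB ?T) (trX ?T)" by (rule hface_IC_PhiC) auto
      finally have "F = (\<lambda>(A, B, X). PhiC e1 e2 A B X) (trA ?T, trB ?T, trX ?T)" by simp
      then show ?thesis by blast
    qed simp
  qed
  show "insert {} (range (\<lambda>(A, B, X). PhiC e1 e2 A B X)) \<subseteq> {F. F face_of HC e1 e2}"
  proof
    fix F assume "F \<in> insert {} (range (\<lambda>(A, B, X). PhiC e1 e2 A B X))"
    then consider "F = {}" | A B X where "F = PhiC e1 e2 A B X" by auto
    then show "F \<in> {F. F face_of HC e1 e2}"
    proof cases
      case (2 A B X)
      have "hface (gC e1 e2) bC IC (TofC A B X) face_of hface (gC e1 e2) bC IC {}"
        by (rule hface_face[OF l TofC_IC])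
      then show ?thesis using 2 by (simp add: PhiC_hface HC_hface)
    qed simp
  qed
qed

lemma faces_P0:
  assumes e: "e1 \<ge> 2" "e2 \<ge> 2"
  shows "{F. F face_of P0 e1 e2} = range (\<lambda>(A, B, X). PhiP e1 e2 A B X)"
proof
  have l: "\<forall>i\<in>IP. linear (gC e1 e2 i)" using lin_gC by blast
  show "{F. F face_of P0 e1 e2} \<subseteq> range (\<lambda>(A, B, X). PhiP e1 e2 A B X)"
  proof
    fix F assume F: "F \<in> {F. F face_of P0 e1 e2}"
    show "F \<in> range (\<lambda>(A, B, X). PhiP e1 e2 A B X)"
    proof (cases "F = {}")
      case True
      show ?thesis
      proof (rule image_eqI[where x="({}, {}, {})"])
        show "F = (\<lambda>(A, B, X). PhiP e1 e2 A B X) ({}, {}, {})" using True PhiP_triv[OF e] by auto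
      qed simp
    next
      case False
      let ?T = "{i \<in> IP. \<forall>x\<in>F. gC e1 e2 i x = bC i}"
      have "F = hface (gC e1 e2) bC IP ?T"
      proof (rule face_hface[OF l finite_IP])
        show "F face_of hface (gC e1 e2) bC IP {}" using F by (simp add: P0_hface)
        show "F \<noteq> {}" by fact
      qed
      also have "\<dots> = PhiP e1 e2 (trA ?T) (trB ?T) (trX ?T)" by (rule hface_IP_PhiP) auto
      finally have "F = (\<lambda>(A, B, X). PhiP e1 e2 A B X) (trA ?T, trB ?T, trX ?T)" by simp
      then show ?thesis by blast
    qed
  qed
  show "range (\<lambda>(A, B, X). PhiP e1 e2 A B X) \<subseteq> {F. F face_of P0 e1 e2}"
  proof
    fix F assume "F \<in> range (\<lambda>(A, B, X). PhiP e1 e2 A B X)"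
    then obtain A B X where F: "F = PhiP e1 e2 A B X" by auto
    have "hface (gC e1 e2) bC IP (TofC A B X) face_of hface (gC e1 e2) bC IP {}"
      by (rule hface_face[OF l TofC_IP])
    then show "F \<in> {F. F face_of P0 e1 e2}" using F by (simp add: PhiP_hface P0_hface)
  qed
qed

lemma order_char:
  fixes \<Phi> :: "'a set \<Rightarrow> 'b set \<Rightarrow> 'c set \<Rightarrow> 'v set" and q :: "'a \<Rightarrow> 'b \<Rightarrow> 'c \<Rightarrow> 'v"
  assumes mem: "\<And>k l x A B X. q k l x \<in> \<Phi> A B X \<longleftrightarrow> k \<in> A \<and> l \<in> B \<and> x \<in> X"
    and triv: "\<And>A B X. A = {} \<or> B = {} \<or> X = {} \<Longrightarrow> \<Phi> A B X = {}"
    and mono: "\<And>A B X A' B' X'. A \<subseteq> A' \<Longrightarrow> B \<subseteq> B' \<Longrightarrow> X \<subseteq> X' \<Longrightarrow> \<Phi> A B X \<subseteq> \<Phi> A' B' X'"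
  shows "\<Phi> A B X \<subseteq> \<Phi> A' B' X' \<longleftrightarrow> (A = {} \<or> B = {} \<or> X = {} \<or> (A \<subseteq> A' \<and> B \<subseteq> B' \<and> X \<subseteq> X'))"
proof
  assume sub: "\<Phi> A B X \<subseteq> \<Phi> A' B' X'"
  show "A = {} \<or> B = {} \<or> X = {} \<or> (A \<subseteq> A' \<and> B \<subseteq> B' \<and> X \<subseteq> X')"
  proof (cases "A = {} \<or> B = {} \<or> X = {}")
    case False
    then obtain k0 l0 x0 where k0: "k0 \<in> A" and l0: "l0 \<in> B" and x0: "x0 \<in> X" by blast
    have "A \<subseteq> A'"
    proof
      fix k assume "k \<in> A" then have "q k l0 x0 \<in> \<Phi> A B X" using mem[of k l0 x0 A B X] l0 x0 by simp
      then have "q k l0 x0 \<in> \<Phi> A' B' X'" by (rule subsetD[OF sub])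
      then show "k \<in> A'" using mem[of k l0 x0 A' B' X'] by simp
    qed
    moreover have "B \<subseteq> B'"
    proof
      fix l assume "l \<in> B" then have "q k0 l x0 \<in> \<Phi> A B X" using mem[of k0 l x0 A B X] k0 x0 by simp
      then have "q k0 l x0 \<in> \<Phi> A' B' X'" by (rule subsetD[OF sub])
      then show "l \<in> B'" using mem[of k0 l x0 A' B' X'] by simp
    qed
    moreover have "X \<subseteq> X'"
    proof
      fix x assume "x \<in> X" then have "q k0 l0 x \<in> \<Phi> A B X" using mem[of k0 l0 x A B X] k0 l0 by simp
      then have "q k0 l0 x \<in> \<Phi> A' B' X'" by (rule subsetD[OF sub])
      then show "x \<in> X'" using mem[of k0 l0 x A' B' X'] by simp
    qed
    ultimately show ?thesis by blast
  next
    case True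
    then show ?thesis by (intro disjCI) auto
  qed
next
  assume h: "A = {} \<or> B = {} \<or> X = {} \<or> (A \<subseteq> A' \<and> B \<subseteq> B' \<and> X \<subseteq> X')"
  show "\<Phi> A B X \<subseteq> \<Phi> A' B' X'"
  proof (cases "A = {} \<or> B = {} \<or> X = {}")
    case True
    then show ?thesis using triv[of A B X] by simp
  next
    case False
    then show ?thesis using h mono[of A A' B B' X X'] by simp
  qed
qed

lemma comb_iso_abstract:
  fixes P :: "'u::euclidean_space set" and Q :: "'w::euclidean_space set"
    and \<Phi> :: "'a set \<Rightarrow> 'b set \<Rightarrow> 'c set \<Rightarrow> 'u set" and \<Psi> :: "'a set \<Rightarrow> 'b set \<Rightarrow> 'c set \<Rightarrow> 'w set"
  assumes fP: "{F. F face_of P} = range (\<lambda>(A, B, X). \<Phi> A B X)"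
    and fQ: "{G. G face_of Q} = range (\<lambda>(A, B, X). \<Psi> A B X)"
    and eqv: "\<And>A B X A' B' X'. \<Phi> A B X \<subseteq> \<Phi> A' B' X' \<longleftrightarrow> \<Psi> A B X \<subseteq> \<Psi> A' B' X'"
  shows "comb_iso P Q"
proof -
  define \<phi> where "\<phi> = (\<lambda>(A, B, X). \<Phi> A B X)"
  define \<psi> where "\<psi> = (\<lambda>(A, B, X). \<Psi> A B X)"
  have eqv': "\<phi> t \<subseteq> \<phi> t' \<longleftrightarrow> \<psi> t \<subseteq> \<psi> t'" for t t'
  proof -
    obtain A B X where t: "t = (A, B, X)" by (cases t) auto
    obtain A' B' X' where t': "t' = (A', B', X')" by (cases t') auto
    show ?thesis unfolding t t' \<phi>_def \<psi>_def using eqv[of A B X A' B' X'] by simp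
  qed
  have eqv2: "\<phi> t = \<phi> t' \<longleftrightarrow> \<psi> t = \<psi> t'" for t t'
    using eqv'[of t t'] eqv'[of t' t] by auto
  define f where "f F = \<psi> (SOME t. F = \<phi> t)" for F
  have fP0: "{F. F face_of P} = range \<phi>" using fP unfolding \<phi>_def .
  have fQ0: "{G. G face_of Q} = range \<psi>" using fQ unfolding \<psi>_def .
  have fP': "F face_of P \<longleftrightarrow> (\<exists>t. F = \<phi> t)" for F
  proof -
    have "F face_of P \<longleftrightarrow> F \<in> range \<phi>" using fP0 by (simp add: set_eq_iff)
    then show ?thesis by auto
  qed
  have fQ': "G face_of Q \<longleftrightarrow> (\<exists>t. G = \<psi> t)" for G
  proof -
    have "G face_of Q \<longleftrightarrow> G \<in> range \<psi>" using fQ0 by (simp add: set_eq_iff)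
    then show ?thesis by auto
  qed
  have fsome: "F = \<phi> (SOME t. F = \<phi> t)" if "F face_of P" for F
    using someI_ex[of "\<lambda>t. F = \<phi> t"] fP' that by blast
  have fval: "f F = \<psi> t" if "F = \<phi> t" for F t
  proof -
    have "\<phi> (SOME t. F = \<phi> t) = \<phi> t" using someI_ex[of "\<lambda>t. F = \<phi> t"] that by blast
    then show ?thesis unfolding f_def using eqv2 by blast
  qed
  have "bij_betw f {F. F face_of P} {G. G face_of Q}"
    unfolding bij_betw_def
  proof
    show "inj_on f {F. F face_of P}"
    proof (rule inj_onI)
      fix F1 F2 assume F1: "F1 \<in> {F. F face_of P}" and F2: "F2 \<in> {F. F face_of P}" and eq: "f F1 = f F2"
      obtain t1 where t1: "F1 = \<phi> t1" using F1 fP' by blast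
      obtain t2 where t2: "F2 = \<phi> t2" using F2 fP' by blast
      have "\<psi> t1 = \<psi> t2" using eq fval[OF t1] fval[OF t2] by simp
      then show "F1 = F2" using eqv2 t1 t2 by blast
    qed
    show "f ` {F. F face_of P} = {G. G face_of Q}"
    proof
      show "f ` {F. F face_of P} \<subseteq> {G. G face_of Q}"
      proof
        fix G assume "G \<in> f ` {F. F face_of P}"
        then obtain F where F: "F face_of P" and G: "G = f F" by blast
        obtain t where t: "F = \<phi> t" using F fP' by blast
        show "G \<in> {G. G face_of Q}" using G fval[OF t] fQ' by blast
      qed
      show "{G. G face_of Q} \<subseteq> f ` {F. F face_of P}"
      proof
        fix G assume "G \<in> {G. G face_of Q}"
        then obtain t where t: "G = \<psi> t" using fQ' by blast
        have "\<phi> t face_of P" using fP' by blast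
        moreover have "f (\<phi> t) = G" using fval[of "\<phi> t" t] t by simp
        ultimately show "G \<in> f ` {F. F face_of P}" by blast
      qed
    qed
  qed
  moreover have "\<forall>F1 F2. F1 face_of P \<longrightarrow> F2 face_of P \<longrightarrow> (F1 \<subseteq> F2 \<longleftrightarrow> f F1 \<subseteq> f F2)"
  proof (intro allI impI)
    fix F1 F2 assume F1: "F1 face_of P" and F2: "F2 face_of P"
    obtain t1 where t1: "F1 = \<phi> t1" using F1 fP' by blast
    obtain t2 where t2: "F2 = \<phi> t2" using F2 fP' by blast
    show "F1 \<subseteq> F2 \<longleftrightarrow> f F1 \<subseteq> f F2" using fval[OF t1] fval[OF t2] t1 t2 eqv' by simp
  qed
  ultimately show ?thesis unfolding comb_iso_def by blast
qed

type_synonym ('a, 'b) qt = "(real^2) \<times> (real^'a) \<times> (real^'b)"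

definition QQ :: "('a::finite, 'b::finite) qt set" where
  "QQ = (std_simplex :: (real^2) set) \<times> (std_simplex :: (real^'a) set) \<times> (std_simplex :: (real^'b) set)"

definition cQ :: "(2 + 'a::finite + 'b::finite) \<Rightarrow> ('a, 'b) qt \<Rightarrow> real" where
  "cQ c z = (case c of Inl j \<Rightarrow> fst z $ j | Inr (Inl k) \<Rightarrow> fst (snd z) $ k | Inr (Inr l) \<Rightarrow> snd (snd z) $ l)"

definition sQ :: "nat \<Rightarrow> ('a::finite, 'b::finite) qt \<Rightarrow> real" where
  "sQ n z = (if n = 0 then (\<Sum>j\<in>UNIV. fst z $ j) else if n = 1 then (\<Sum>k\<in>UNIV. fst (snd z) $ k)
             else (\<Sum>l\<in>UNIV. snd (snd z) $ l))"

definition gQ :: "((2 + 'a::finite + 'b::finite) + nat) \<Rightarrow> ('a, 'b) qt \<Rightarrow> real" where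
  "gQ i z = (case i of Inl c \<Rightarrow> - cQ c z | Inr n \<Rightarrow> (if even n then 1 else -1) * sQ (n div 2) z)"

definition bQ :: "((2 + 'a::finite + 'b::finite) + nat) \<Rightarrow> real" where
  "bQ i = (case i of Inl c \<Rightarrow> 0 | Inr n \<Rightarrow> (if even n then 1 else -1))"

definition IQ :: "((2 + 'a::finite + 'b::finite) + nat) set" where "IQ = range Inl \<union> Inr ` {..<6}"

definition PhiQ :: "'a::finite set \<Rightarrow> 'b::finite set \<Rightarrow> 2 set \<Rightarrow> ('a, 'b) qt set" where
  "PhiQ A B X = {z \<in> QQ. (\<forall>j. j \<notin> X \<longrightarrow> fst z $ j = 0) \<and> (\<forall>k. k \<notin> A \<longrightarrow> fst (snd z) $ k = 0)
      \<and> (\<forall>l. l \<notin> B \<longrightarrow> snd (snd z) $ l = 0)}"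

definition TofQ :: "'a::finite set \<Rightarrow> 'b::finite set \<Rightarrow> 2 set \<Rightarrow> ((2 + 'a + 'b) + nat) set" where
  "TofQ A B X = Inl ` (Inl ` (- X) \<union> Inr ` (Inl ` (- A) \<union> Inr ` (- B)))"

definition qv :: "'a::finite \<Rightarrow> 'b::finite \<Rightarrow> 2 \<Rightarrow> ('a, 'b) qt" where
  "qv k l x = (axis x 1, axis k 1, axis l 1)"

lemma lin_gQ: "linear (gQ i)"
proof (rule linearI)
  fix x y :: "('a::finite, 'b::finite) qt" and c :: real
  show "gQ i (x + y) = gQ i x + gQ i y"
    by (cases i) (auto simp: gQ_def cQ_def sQ_def sum.distrib algebra_simps split: sum.splits)
  show "gQ i (c *\<^sub>R x) = c *\<^sub>R gQ i x"
    by (cases i) (auto simp: gQ_def cQ_def sQ_def sum_distrib_left algebra_simps split: sum.splits)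
qed

lemma finite_IQ: "finite (IQ :: ((2 + 'a::finite + 'b::finite) + nat) set)" by (simp add: IQ_def)

lemma mem_QQ: "z \<in> QQ \<longleftrightarrow> (\<forall>c. 0 \<le> cQ c z) \<and> sQ 0 z = 1 \<and> sQ 1 z = 1 \<and> sQ 2 z = 1"
proof -
  have "(\<forall>c. 0 \<le> cQ c z) \<longleftrightarrow> (\<forall>j. 0 \<le> fst z $ j) \<and> (\<forall>k. 0 \<le> fst (snd z) $ k) \<and> (\<forall>l. 0 \<le> snd (snd z) $ l)"
  proof
    assume h: "\<forall>c. 0 \<le> cQ c z"
    show "(\<forall>j. 0 \<le> fst z $ j) \<and> (\<forall>k. 0 \<le> fst (snd z) $ k) \<and> (\<forall>l. 0 \<le> snd (snd z) $ l)"
    proof (intro conjI allI)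
      fix j show "0 \<le> fst z $ j" using h[rule_format, of "Inl j"] by (simp add: cQ_def)
    next
      fix k show "0 \<le> fst (snd z) $ k" using h[rule_format, of "Inr (Inl k)"] by (simp add: cQ_def)
    next
      fix l show "0 \<le> snd (snd z) $ l" using h[rule_format, of "Inr (Inr l)"] by (simp add: cQ_def)
    qed
  next
    assume h: "(\<forall>j. 0 \<le> fst z $ j) \<and> (\<forall>k. 0 \<le> fst (snd z) $ k) \<and> (\<forall>l. 0 \<le> snd (snd z) $ l)"
    show "\<forall>c. 0 \<le> cQ c z"
    proof
      fix c show "0 \<le> cQ c z" using h by (auto simp: cQ_def split: sum.splits)
    qed
  qed
  then show ?thesis
    by (cases z) (auto simp: QQ_def std_simplex_def sQ_def)
qed

lemma hface_IQ_iff: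
  assumes T: "T \<subseteq> IQ"
  shows "z \<in> hface gQ bQ IQ T \<longleftrightarrow> z \<in> QQ \<and> (\<forall>c. Inl c \<in> T \<longrightarrow> cQ c z = 0)"
proof
  assume z: "z \<in> hface gQ bQ IQ T"
  have a: "\<forall>i\<in>IQ. gQ i z \<le> bQ i" and b: "\<forall>i\<in>T. gQ i z = bQ i" using z by (auto simp: hface_def)
  have c: "0 \<le> cQ c z" for c using a[rule_format, of "Inl c"] by (simp add: IQ_def gQ_def bQ_def)
  have s: "sQ m z = 1" if "m < 3" for m
  proof -
    have "gQ (Inr (2 * m)) z \<le> bQ (Inr (2 * m) :: (2 + 'a + 'b) + nat)" using a that by (auto simp: IQ_def)
    moreover have "gQ (Inr (2 * m + 1)) z \<le> bQ (Inr (2 * m + 1) :: (2 + 'a + 'b) + nat)" using a that by (auto simp: IQ_def)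
    ultimately show ?thesis by (simp add: gQ_def bQ_def)
  qed
  have "z \<in> QQ" unfolding mem_QQ using c s[of 0] s[of 1] s[of 2] by simp
  moreover have "\<forall>c. Inl c \<in> T \<longrightarrow> cQ c z = 0" using b by (auto simp: gQ_def bQ_def)
  ultimately show "z \<in> QQ \<and> (\<forall>c. Inl c \<in> T \<longrightarrow> cQ c z = 0)" by blast
next
  assume h: "z \<in> QQ \<and> (\<forall>c. Inl c \<in> T \<longrightarrow> cQ c z = 0)"
  then have c: "\<forall>c. 0 \<le> cQ c z" and s: "sQ 0 z = 1" "sQ 1 z = 1" "sQ 2 z = 1" by (auto simp: mem_QQ)
  have sn: "sQ (n div 2) z = 1" if "n < 6" for n :: nat
  proof -
    have "n div 2 < 3" using that by auto
    then have "n div 2 = 0 \<or> n div 2 = 1 \<or> n div 2 = 2" by auto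
    then show ?thesis using s by auto
  qed
  have "\<forall>i\<in>IQ. gQ i z \<le> bQ i"
  proof
    fix i :: "(2 + 'a + 'b) + nat" assume i: "i \<in> IQ"
    show "gQ i z \<le> bQ i"
    proof (cases i)
      case (Inl c) then show ?thesis using c by (simp add: gQ_def bQ_def)
    next
      case (Inr n) then have "n < 6" using i by (auto simp: IQ_def)
      then show ?thesis using Inr sn by (simp add: gQ_def bQ_def)
    qed
  qed
  moreover have "\<forall>i\<in>T. gQ i z = bQ i"
  proof
    fix i :: "(2 + 'a + 'b) + nat" assume i: "i \<in> T"
    show "gQ i z = bQ i"
    proof (cases i)
      case (Inl c) then show ?thesis using h i by (simp add: gQ_def bQ_def)
    next
      case (Inr n) then have "n < 6" using i T by (auto simp: IQ_def)
      then show ?thesis using Inr sn by (simp add: gQ_def bQ_def)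
    qed
  qed
  ultimately show "z \<in> hface gQ bQ IQ T" by (simp add: hface_def)
qed

lemma hface_IQ_PhiQ:
  assumes T: "T \<subseteq> IQ"
  shows "hface gQ bQ IQ T = PhiQ {k. Inl (Inr (Inl k)) \<notin> T} {l. Inl (Inr (Inr l)) \<notin> T} {j. Inl (Inl j) \<notin> T}"
proof -
  have "(\<forall>c. Inl c \<in> T \<longrightarrow> cQ c z = 0) \<longleftrightarrow> (\<forall>j. Inl (Inl j) \<in> T \<longrightarrow> fst z $ j = 0) \<and>
     (\<forall>k. Inl (Inr (Inl k)) \<in> T \<longrightarrow> fst (snd z) $ k = 0) \<and> (\<forall>l. Inl (Inr (Inr l)) \<in> T \<longrightarrow> snd (snd z) $ l = 0)"
    for z :: "('a, 'b) qt"
  proof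
    assume h: "\<forall>c. Inl c \<in> T \<longrightarrow> cQ c z = 0"
    show "(\<forall>j. Inl (Inl j) \<in> T \<longrightarrow> fst z $ j = 0) \<and>
     (\<forall>k. Inl (Inr (Inl k)) \<in> T \<longrightarrow> fst (snd z) $ k = 0) \<and> (\<forall>l. Inl (Inr (Inr l)) \<in> T \<longrightarrow> snd (snd z) $ l = 0)"
      using h by (auto simp: cQ_def)
  next
    assume h: "(\<forall>j. Inl (Inl j) \<in> T \<longrightarrow> fst z $ j = 0) \<and>
     (\<forall>k. Inl (Inr (Inl k)) \<in> T \<longrightarrow> fst (snd z) $ k = 0) \<and> (\<forall>l. Inl (Inr (Inr l)) \<in> T \<longrightarrow> snd (snd z) $ l = 0)"
    show "\<forall>c. Inl c \<in> T \<longrightarrow> cQ c z = 0"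
    proof (intro allI impI)
      fix c assume "Inl c \<in> T" then show "cQ c z = 0" using h by (auto simp: cQ_def split: sum.splits)
    qed
  qed
  then show ?thesis unfolding set_eq_iff hface_IQ_iff[OF T] PhiQ_def by auto
qed

lemma TofQ_IQ: "TofQ A B X \<subseteq> IQ" by (auto simp: TofQ_def IQ_def)

lemma PhiQ_hface: "PhiQ A B X = hface gQ bQ IQ (TofQ A B X)"
proof -
  have 1: "{k. Inl (Inr (Inl k)) \<notin> TofQ A B X} = A" by (auto simp: TofQ_def image_iff)
  have 2: "{l. Inl (Inr (Inr l)) \<notin> TofQ A B X} = B" by (auto simp: TofQ_def image_iff)
  have 3: "{j. Inl (Inl j) \<notin> TofQ A B X} = X" by (auto simp: TofQ_def image_iff)
  show ?thesis using hface_IQ_PhiQ[OF TofQ_IQ, of A B X] unfolding 1 2 3 by simp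
qed

lemma QQ_hface: "QQ = hface gQ bQ IQ {}"
  using hface_IQ_iff[of "{}"] by auto

lemma faces_QQ: "{G. G face_of (QQ :: ('a::finite, 'b::finite) qt set)} = range (\<lambda>(A, B, X). PhiQ A B X)"
proof
  have l: "\<forall>i\<in>(IQ :: ((2 + 'a + 'b) + nat) set). linear (gQ i)" using lin_gQ by blast
  show "{G. G face_of (QQ :: ('a, 'b) qt set)} \<subseteq> range (\<lambda>(A, B, X). PhiQ A B X)"
  proof
    fix G assume G: "G \<in> {G. G face_of (QQ :: ('a, 'b) qt set)}"
    show "G \<in> range (\<lambda>(A, B, X). PhiQ A B X)"
    proof (cases "G = {}")
      case True
      have "PhiQ {} {} {} = ({} :: ('a, 'b) qt set)"
      proof -
        have "z \<notin> PhiQ {} {} {}" for z :: "('a, 'b) qt"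
        proof
          assume "z \<in> PhiQ {} {} {}"
          then have "z \<in> QQ" "\<forall>j. fst z $ j = 0" by (auto simp: PhiQ_def)
          then show False by (auto simp: QQ_def std_simplex_def)
        qed
        then show ?thesis by blast
      qed
      then have "G = (\<lambda>(A, B, X). PhiQ A B X) ({}, {}, {})" using True by simp
      then show ?thesis by blast
    next
      case False
      let ?T = "{i \<in> IQ. \<forall>x\<in>G. gQ i x = bQ i}"
      have "G = hface gQ bQ IQ ?T"
      proof (rule face_hface[OF l finite_IQ])
        show "G face_of hface gQ bQ IQ {}" using G by (simp add: QQ_hface)
        show "G \<noteq> {}" by fact
      qed
      also have "\<dots> = PhiQ {k. Inl (Inr (Inl k)) \<notin> ?T} {l. Inl (Inr (Inr l)) \<notin> ?T} {j. Inl (Inl j) \<notin> ?T}"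
        by (rule hface_IQ_PhiQ) auto
      finally have "G = (\<lambda>(A, B, X). PhiQ A B X) ({k. Inl (Inr (Inl k)) \<notin> ?T}, {l. Inl (Inr (Inr l)) \<notin> ?T}, {j. Inl (Inl j) \<notin> ?T})" by simp
      then show ?thesis by blast
    qed
  qed
  show "range (\<lambda>(A, B, X). PhiQ A B X) \<subseteq> {G. G face_of (QQ :: ('a, 'b) qt set)}"
  proof
    fix G assume "G \<in> range (\<lambda>(A, B, X). PhiQ A B X :: ('a, 'b) qt set)"
    then obtain A B X where G: "G = PhiQ A B X" by auto
    have "hface gQ bQ IQ (TofQ A B X) face_of hface gQ bQ IQ {}"
      by (rule hface_face[OF l TofQ_IQ])
    then show "G \<in> {G. G face_of (QQ :: ('a, 'b) qt set)}" using G by (simp add: PhiQ_hface QQ_hface)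
  qed
qed

lemma axis_sum: "(\<Sum>j\<in>UNIV. axis i (1::real) $ j) = 1"
  by (simp add: axis_def)

lemma qv_mem: "qv k l x \<in> PhiQ A B X \<longleftrightarrow> k \<in> A \<and> l \<in> B \<and> x \<in> X"
proof -
  have "qv k l x \<in> QQ" by (simp add: qv_def QQ_def std_simplex_def axis_sum) (simp add: axis_def)
  then show ?thesis by (auto simp: PhiQ_def qv_def axis_def)
qed

lemma PhiQ_triv: "A = {} \<or> B = {} \<or> X = {} \<Longrightarrow> PhiQ A B X = {}"
proof -
  assume t: "A = {} \<or> B = {} \<or> X = {}"
  have "z \<notin> PhiQ A B X" for z
  proof
    assume z: "z \<in> PhiQ A B X"
    then have q: "z \<in> QQ" by (simp add: PhiQ_def)
    from t show False
    proof (elim disjE)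
      assume "A = {}" then have "\<forall>k. fst (snd z) $ k = 0" using z by (auto simp: PhiQ_def)
      then show False using q by (auto simp: QQ_def std_simplex_def)
    next
      assume "B = {}" then have "\<forall>l. snd (snd z) $ l = 0" using z by (auto simp: PhiQ_def)
      then show False using q by (auto simp: QQ_def std_simplex_def)
    next
      assume "X = {}" then have "\<forall>j. fst z $ j = 0" using z by (auto simp: PhiQ_def)
      then show False using q by (auto simp: QQ_def std_simplex_def)
    qed
  qed
  then show ?thesis by blast
qed

lemma PhiQ_mono: "A \<subseteq> A' \<Longrightarrow> B \<subseteq> B' \<Longrightarrow> X \<subseteq> X' \<Longrightarrow> PhiQ A B X \<subseteq> PhiQ A' B' X'"
  by (auto simp: PhiQ_def)

lemma dim_coord:
  fixes M :: "'n::finite set"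
  shows "dim {x::real^'n. \<forall>m. m \<notin> M \<longrightarrow> x $ m = 0} = card M"
proof -
  let ?d = "(\<lambda>m. axis m (1::real)) ` M"
  have dB: "?d \<subseteq> Basis" by (auto simp: Basis_vec_def)
  have eq: "{x::real^'n. \<forall>i\<in>Basis. i \<notin> ?d \<longrightarrow> x \<bullet> i = 0} = {x. \<forall>m. m \<notin> M \<longrightarrow> x $ m = 0}"
  proof (rule set_eqI, rule iffI)
    fix x :: "real^'n"
    assume h: "x \<in> {x. \<forall>i\<in>Basis. i \<notin> ?d \<longrightarrow> x \<bullet> i = 0}"
    show "x \<in> {x. \<forall>m. m \<notin> M \<longrightarrow> x $ m = 0}"
    proof (intro CollectI allI impI)
      fix m assume m: "m \<notin> M"
      have "axis m (1::real) \<in> Basis" by (simp add: Basis_vec_def) blast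
      moreover have "axis m (1::real) \<notin> ?d" using m by (auto simp: axis_eq_axis)
      ultimately have "x \<bullet> axis m 1 = 0" using h by blast
      then show "x $ m = 0" by (simp add: inner_axis)
    qed
  next
    fix x :: "real^'n"
    assume h: "x \<in> {x. \<forall>m. m \<notin> M \<longrightarrow> x $ m = 0}"
    show "x \<in> {x. \<forall>i\<in>Basis. i \<notin> ?d \<longrightarrow> x \<bullet> i = 0}"
    proof (intro CollectI ballI impI)
      fix i :: "real^'n" assume i: "i \<in> Basis" "i \<notin> ?d"
      then obtain m where m: "i = axis m 1" by (auto simp: Basis_vec_def)
      then have "m \<notin> M" using i by auto
      then show "x \<bullet> i = 0" using h m by (simp add: inner_axis)
    qed
  qed
  have "card ?d = card M" by (rule card_image) (auto simp: inj_on_def axis_eq_axis)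
  then show ?thesis using dim_substandard[OF dB] eq by simp
qed

lemma aff_dim_slice:
  fixes G :: "'v::euclidean_space set" and h :: "'v \<Rightarrow> real"
  assumes lin: "linear h" and G0: "0 \<in> G" and cone: "\<And>x c. x \<in> G \<Longrightarrow> 0 \<le> c \<Longrightarrow> c *\<^sub>R x \<in> G"
    and pos: "\<And>x. x \<in> G \<Longrightarrow> x \<noteq> 0 \<Longrightarrow> h x > 0"
  shows "aff_dim (G \<inter> {x. h x = 1}) + 1 = aff_dim G"
proof -
  let ?S = "G \<inter> {x. h x = 1}"
  have aff: "affine {x. h x = 1}"
    unfolding affine_def using lin by (auto simp: linear_add linear_scale algebra_simps
        simp flip: distrib_right)
  have "affine hull ?S \<subseteq> {x. h x = 1}" by (rule hull_minimal) (use aff in auto)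
  then have n0: "0 \<notin> affine hull ?S" using lin by (auto simp: linear_0)
  have "aff_dim (insert 0 ?S) = aff_dim ?S + 1" using aff_dim_insert[of 0 ?S] n0 by simp
  moreover have "aff_dim (insert 0 ?S) = int (dim (insert 0 ?S))"
    by (rule aff_dim_zero) (simp add: hull_inc)
  moreover have "aff_dim G = int (dim G)" by (rule aff_dim_zero) (simp add: hull_inc G0)
  moreover have "span (insert 0 ?S) = span G"
  proof (rule antisym)
    show "span (insert 0 ?S) \<subseteq> span G"
      by (rule span_minimal) (use G0 in \<open>auto intro: span_base\<close>)
    have "G \<subseteq> span (insert 0 ?S)"
    proof
      fix x assume x: "x \<in> G"
      show "x \<in> span (insert 0 ?S)"
      proof (cases "x = 0")
        case True then show ?thesis by (simp add: span_zero)
      next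
        case False
        then have hx: "h x > 0" using pos x by auto
        have "(1 / h x) *\<^sub>R x \<in> ?S" using cone[OF x, of "1 / h x"] hx lin by (simp add: linear_scale)
        then have "(1 / h x) *\<^sub>R x \<in> span (insert 0 ?S)" by (auto intro: span_base)
        then have "h x *\<^sub>R ((1 / h x) *\<^sub>R x) \<in> span (insert 0 ?S)" by (rule span_mul)
        then show ?thesis using hx by simp
      qed
    qed
    then show "span G \<subseteq> span (insert 0 ?S)" by (rule span_minimal) simp
  qed
  then have "dim (insert 0 ?S) = dim G" by (metis dim_span)
  ultimately show ?thesis by simp
qed

lemma dim_hyper_sub:
  fixes W :: "'v::euclidean_space set" and f :: "'v \<Rightarrow> real"
  assumes W: "subspace W" and lin: "linear f" and q: "q \<in> W" "f q \<noteq> 0"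
  shows "dim (W \<inter> {y. f y = 0}) + 1 = dim W"
proof -
  let ?V = "W \<inter> {y. f y = 0}"
  have K: "subspace {y. f y = 0}" unfolding subspace_def using lin by (simp add: linear_add linear_scale linear_0)
  have V: "subspace ?V" by (rule subspace_inter[OF W K])
  have "span ?V \<subset> span W"
  proof -
    have ps: "?V \<subset> W" using q by auto
    have e1: "span ?V = ?V" using V by (simp only: span_eq_iff)
    have e2: "span W = W" using W by (simp only: span_eq_iff)
    show ?thesis unfolding e1 e2 by (rule ps)
  qed
  then have lt: "dim ?V < dim W" by (rule dim_psubset)
  have "W \<subseteq> span (insert q ?V)"
  proof
    fix y assume y: "y \<in> W"
    define c where "c = f y / f q"
    have "y - c *\<^sub>R q \<in> W" using y q W by (simp add: subspace_diff subspace_mul)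
    moreover have "f (y - c *\<^sub>R q) = 0"
      using q lin unfolding c_def by (simp add: linear_diff linear_scale)
    ultimately have "y - c *\<^sub>R q \<in> ?V" by simp
    then have "y - c *\<^sub>R q \<in> span (insert q ?V)" by (auto intro: span_base)
    moreover have "c *\<^sub>R q \<in> span (insert q ?V)" by (auto intro: span_mul span_base)
    ultimately have "(y - c *\<^sub>R q) + c *\<^sub>R q \<in> span (insert q ?V)" by (rule span_add)
    then show "y \<in> span (insert q ?V)" by simp
  qed
  then have "dim W \<le> dim (span (insert q ?V))" by (rule dim_subset)
  also have "\<dots> = dim (insert q ?V)" by simp
  also have "\<dots> \<le> dim ?V + 1" by (simp add: dim_insert)
  finally show ?thesis using lt by simp
qed

definition WW :: "nat \<Rightarrow> nat \<Rightarrow> 'a::finite set \<Rightarrow> 'b::finite set \<Rightarrow> 2 set \<Rightarrow> (real^('a + 'b)) set" where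
  "WW e1 e2 A B X = {y. (\<forall>k. k \<notin> A \<longrightarrow> y $ Inl k = 0) \<and> (\<forall>l. l \<notin> B \<longrightarrow> y $ Inr l = 0)
      \<and> (1 \<notin> X \<longrightarrow> sR y = e2 * sL y) \<and> (2 \<notin> X \<longrightarrow> sL y = e1 * sR y)}"

lemma PhiC_WW: "PhiC e1 e2 A B X = HC e1 e2 \<inter> WW e1 e2 A B X"
  by (auto simp: PhiC_def WW_def)

lemma subspace_WW: "subspace (WW e1 e2 A B X)"
  unfolding subspace_def
proof (intro conjI ballI allI)
  show "0 \<in> WW e1 e2 A B X" by (simp add: WW_def)
next
  fix x y assume x: "x \<in> WW e1 e2 A B X" and y: "y \<in> WW e1 e2 A B X"
  have a: "(\<forall>k. k \<notin> A \<longrightarrow> (x + y) $ Inl k = 0)" "(\<forall>l. l \<notin> B \<longrightarrow> (x + y) $ Inr l = 0)"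
    using x y by (auto simp: WW_def)
  have b: "1 \<notin> X \<longrightarrow> sR (x + y) = e2 * sL (x + y)"
  proof
    assume "1 \<notin> X"
    then have "sR x = e2 * sL x" "sR y = e2 * sL y" using x y unfolding WW_def by blast+
    then show "sR (x + y) = e2 * sL (x + y)" by (simp add: distrib_left)
  qed
  have c: "2 \<notin> X \<longrightarrow> sL (x + y) = e1 * sR (x + y)"
  proof
    assume "2 \<notin> X"
    then have "sL x = e1 * sR x" "sL y = e1 * sR y" using x y unfolding WW_def by blast+
    then show "sL (x + y) = e1 * sR (x + y)" by (simp add: distrib_left)
  qed
  show "x + y \<in> WW e1 e2 A B X" using a b c unfolding WW_def by blast
next
  fix c :: real and x assume x: "x \<in> WW e1 e2 A B X"
  have a: "(\<forall>k. k \<notin> A \<longrightarrow> (c *\<^sub>R x) $ Inl k = 0)" "(\<forall>l. l \<notin> B \<longrightarrow> (c *\<^sub>R x) $ Inr l = 0)"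
    using x by (auto simp: WW_def)
  have b: "1 \<notin> X \<longrightarrow> sR (c *\<^sub>R x) = e2 * sL (c *\<^sub>R x)"
  proof
    assume "1 \<notin> X"
    then have "sR x = e2 * sL x" using x unfolding WW_def by blast
    then show "sR (c *\<^sub>R x) = e2 * sL (c *\<^sub>R x)" by simp
  qed
  have d: "2 \<notin> X \<longrightarrow> sL (c *\<^sub>R x) = e1 * sR (c *\<^sub>R x)"
  proof
    assume "2 \<notin> X"
    then have "sL x = e1 * sR x" using x unfolding WW_def by blast
    then show "sL (c *\<^sub>R x) = e1 * sR (c *\<^sub>R x)" by simp
  qed
  show "c *\<^sub>R x \<in> WW e1 e2 A B X" using a b d unfolding WW_def by blast
qed

lemma WW_UNIV: "WW e1 e2 A B UNIV = {y. \<forall>m. m \<notin> Inl ` A \<union> Inr ` B \<longrightarrow> y $ m = 0}"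
proof -
  have "(\<forall>m. m \<notin> Inl ` A \<union> Inr ` B \<longrightarrow> y $ m = 0) \<longleftrightarrow>
        (\<forall>k. k \<notin> A \<longrightarrow> y $ Inl k = 0) \<and> (\<forall>l. l \<notin> B \<longrightarrow> y $ Inr l = 0)" for y :: "real^('a+'b)"
  proof
    assume h: "\<forall>m. m \<notin> Inl ` A \<union> Inr ` B \<longrightarrow> y $ m = 0"
    show "(\<forall>k. k \<notin> A \<longrightarrow> y $ Inl k = 0) \<and> (\<forall>l. l \<notin> B \<longrightarrow> y $ Inr l = 0)"
      using h by (auto simp: image_iff)
  next
    assume h: "(\<forall>k. k \<notin> A \<longrightarrow> y $ Inl k = 0) \<and> (\<forall>l. l \<notin> B \<longrightarrow> y $ Inr l = 0)"
    show "\<forall>m. m \<notin> Inl ` A \<union> Inr ` B \<longrightarrow> y $ m = 0"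
    proof (intro allI impI)
      fix m assume "m \<notin> Inl ` A \<union> Inr ` B"
      then show "y $ m = 0" using h by (cases m) auto
    qed
  qed
  then show ?thesis by (auto simp: WW_def)
qed

lemma dim_WW_UNIV: "dim (WW e1 e2 (A::'a::finite set) (B::'b::finite set) UNIV) = card A + card B"
proof -
  have "card (Inl ` A \<union> Inr ` B :: ('a + 'b) set) = card A + card B"
    by (subst card_Un_disjoint) (auto simp: card_image)
  then show ?thesis unfolding WW_UNIV dim_coord by simp
qed

lemma X_cases: "(X::2 set) \<noteq> {} \<Longrightarrow> X = {1} \<or> X = {2} \<or> X = UNIV"
proof -
  assume ne: "X \<noteq> {}"
  have U: "(UNIV :: 2 set) = {1, 2}" using exhaust_2 by auto
  have "X \<subseteq> {1, 2}" using U by auto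
  then have "X \<in> Pow {1, 2}" by simp
  then have "X = {} \<or> X = {1} \<or> X = {2} \<or> X = {1, 2}" by (auto simp: Pow_insert)
  then show ?thesis using ne U by auto
qed

lemma card_X: "card (X :: 2 set) \<le> 2"
proof -
  have "card X \<le> card (UNIV :: 2 set)" by (rule card_mono) auto
  then show ?thesis by simp
qed

lemma linear_f1: "linear (\<lambda>y. sL y - c * sR y)" by (rule linearI) (simp_all add: algebra_simps)
lemma linear_f2: "linear (\<lambda>y. sR y - c * sL y)" by (rule linearI) (simp_all add: algebra_simps)

lemma WW_1: "WW e1 e2 A B {1} = WW e1 e2 A B UNIV \<inter> {y. sL y - e1 * sR y = 0}"
  by (auto simp: WW_def)
lemma WW_2: "WW e1 e2 A B {2} = WW e1 e2 A B UNIV \<inter> {y. sR y - e2 * sL y = 0}"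
  by (auto simp: WW_def)

lemma col_in_WW_UNIV: "k \<in> A \<Longrightarrow> l \<in> B \<Longrightarrow> col_vec k i l j \<in> WW e1 e2 A B UNIV"
  by (auto simp: WW_def col_vec_def)

lemma dim_WW_1:
  assumes e: "e1 \<ge> 2" "e2 \<ge> 2" and A: "A \<noteq> {}" and B: "B \<noteq> {}"
  shows "dim (WW e1 e2 A B {1}) + 1 = card A + card B"
proof -
  obtain k l where k: "k \<in> A" and l: "l \<in> B" using A B by blast
  have f: "sL (col_vec k 1 l e2) - e1 * sR (col_vec k 1 l e2) \<noteq> 0"
    using e12_ne1[OF e] by (simp add: sL_col sR_col)
  have "dim (WW e1 e2 A B UNIV \<inter> {y. sL y - e1 * sR y = 0}) + 1 = dim (WW e1 e2 A B UNIV)"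
    by (rule dim_hyper_sub[OF subspace_WW linear_f1 col_in_WW_UNIV[OF k l] f])
  then show ?thesis unfolding WW_1 dim_WW_UNIV .
qed

lemma dim_WW_2:
  assumes e: "e1 \<ge> 2" "e2 \<ge> 2" and A: "A \<noteq> {}" and B: "B \<noteq> {}"
  shows "dim (WW e1 e2 A B {2}) + 1 = card A + card B"
proof -
  obtain k l where k: "k \<in> A" and l: "l \<in> B" using A B by blast
  have f: "sR (col_vec k e1 l 1) - e2 * sL (col_vec k e1 l 1) \<noteq> 0"
    using e12_ne1[OF e] by (simp add: sL_col sR_col mult.commute)
  have "dim (WW e1 e2 A B UNIV \<inter> {y. sR y - e2 * sL y = 0}) + 1 = dim (WW e1 e2 A B UNIV)"
    by (rule dim_hyper_sub[OF subspace_WW linear_f2 col_in_WW_UNIV[OF k l] f])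
  then show ?thesis unfolding WW_2 dim_WW_UNIV .
qed

lemma ev_nonneg: "(c::real) > 0 \<Longrightarrow> eventually (\<lambda>M. 0 \<le> a + M * c) at_top"
proof -
  assume c: "c > 0"
  show ?thesis
  proof (rule eventually_mono[OF eventually_ge_at_top[of "-a / c"]])
    fix M assume "-a / c \<le> M"
    then have "(-a) / c \<le> M" by simp
    then have "-a \<le> M * c" by (simp only: pos_divide_le_eq[OF c])
    then show "0 \<le> a + M * c" by simp
  qed
qed

lemma UNIV2_ne: "(UNIV :: 2 set) \<noteq> {1}" "(UNIV :: 2 set) \<noteq> {2}"
proof -
  show "(UNIV :: 2 set) \<noteq> {1}"
  proof
    assume "(UNIV :: 2 set) = {1}"
    then have "(2::2) \<in> {1}" by (metis UNIV_I)
    then show False by simp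
  qed
  show "(UNIV :: 2 set) \<noteq> {2}"
  proof
    assume "(UNIV :: 2 set) = {2}"
    then have "(1::2) \<in> {2}" by (metis UNIV_I)
    then show False by simp
  qed
qed

lemma pt_in_WW_HC:
  assumes e: "e1 \<ge> 2" "e2 \<ge> 2" and A: "A \<noteq> {}" and B: "B \<noteq> {}" and X: "X \<noteq> {}"
  defines "\<alpha> \<equiv> (if X = {2} then 1 else if X = {1} then real e1 else 1)"
  defines "\<beta> \<equiv> (if X = {2} then real e2 else 1)"
  shows "pt A B \<alpha> \<beta> \<in> PhiC e1 e2 A B X" and "\<alpha> > 0" and "\<beta> > 0"
proof -
  have e1r: "real e1 \<ge> 2" and e2r: "real e2 \<ge> 2" using e by auto
  show ap: "\<alpha> > 0" using e1r unfolding \<alpha>_def by auto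
  show bp: "\<beta> > 0" using e2r unfolding \<beta>_def by auto
  let ?p = "pt A B \<alpha> \<beta>"
  have sl: "sL ?p = \<alpha>" using sL_pt[OF A] .
  have sr: "sR ?p = \<beta>" using sR_pt[OF B] .
  have nn: "\<forall>m. 0 \<le> ?p $ m" using ap bp by (auto simp: pt_def split: sum.splits)
  from X_cases[OF X] consider "X = {1}" | "X = {2}" | "X = UNIV" by blast
  then have c: "sL ?p \<le> e1 * sR ?p \<and> sR ?p \<le> e2 * sL ?p \<and> (1 \<notin> X \<longrightarrow> sR ?p = e2 * sL ?p)
      \<and> (2 \<notin> X \<longrightarrow> sL ?p = e1 * sR ?p)"
  proof cases
    case 1
    then have "\<alpha> = e1" "\<beta> = 1" unfolding \<alpha>_def \<beta>_def by auto
    moreover have "1 \<le> real e2 * real e1" using e1r e2r mult_mono[of 1 "real e2" 1 "real e1"] by auto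
    ultimately show ?thesis using 1 sl sr by auto
  next
    case 2
    then have "\<alpha> = 1" "\<beta> = e2" unfolding \<alpha>_def \<beta>_def by auto
    moreover have "1 \<le> real e1 * real e2" using e1r e2r mult_mono[of 1 "real e1" 1 "real e2"] by auto
    ultimately show ?thesis using 2 sl sr by auto
  next
    case 3
    then have "X \<noteq> {1}" "X \<noteq> {2}" using UNIV2_ne by auto
    then have "\<alpha> = 1" "\<beta> = 1" unfolding \<alpha>_def \<beta>_def by auto
    then show ?thesis using 3 sl sr e1r e2r by auto
  qed
  show "?p \<in> PhiC e1 e2 A B X"
    unfolding PhiC_def HC_def using nn c by auto
qed

lemma span_PhiC:
  assumes e: "e1 \<ge> 2" "e2 \<ge> 2" and A: "A \<noteq> {}" and B: "B \<noteq> {}" and X: "X \<noteq> {}"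
  shows "span (PhiC e1 e2 A B X) = WW e1 e2 A B X"
proof
  show "span (PhiC e1 e2 A B X) \<subseteq> WW e1 e2 A B X"
    by (rule span_minimal[OF _ subspace_WW]) (auto simp: PhiC_WW)
  show "WW e1 e2 A B X \<subseteq> span (PhiC e1 e2 A B X)"
  proof
    fix y assume y: "y \<in> WW e1 e2 A B X"
    define \<alpha> where "\<alpha> = (if X = {2} then 1 else if X = {1} then real e1 else 1)"
    define \<beta> where "\<beta> = (if X = {2} then real e2 else 1)"
    let ?p = "pt A B \<alpha> \<beta>"
    have pP: "?p \<in> PhiC e1 e2 A B X" and ap: "\<alpha> > 0" and bp: "\<beta> > 0"
      using pt_in_WW_HC[OF e A B X] unfolding \<alpha>_def \<beta>_def by blast+
    have pW: "?p \<in> WW e1 e2 A B X" using pP by (simp add: PhiC_WW)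
    have e1r: "real e1 \<ge> 2" and e2r: "real e2 \<ge> 2" using e by auto
    have ev1: "eventually (\<lambda>M::real. \<forall>m. 0 \<le> y $ m + M * ?p $ m) at_top"
    proof (rule eventually_all_finite)
      fix m
      show "eventually (\<lambda>M. 0 \<le> y $ m + M * ?p $ m) at_top"
      proof (cases m)
        case (Inl k)
        show ?thesis
        proof (cases "k \<in> A")
          case True
          have "card A > 0" using A by (simp add: card_gt_0_iff)
          then have "?p $ m > 0" using Inl ap True by simp
          then show ?thesis by (rule ev_nonneg)
        next
          case False
          then have "y $ m = 0" "?p $ m = 0" using Inl y by (auto simp: WW_def)
          then show ?thesis by simp
        qed
      next
        case (Inr l)
        show ?thesis
        proof (cases "l \<in> B")
          case True
          have "card B > 0" using B by (simp add: card_gt_0_iff)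
          then have "?p $ m > 0" using Inr bp True by simp
          then show ?thesis by (rule ev_nonneg)
        next
          case False
          then have "y $ m = 0" "?p $ m = 0" using Inr y by (auto simp: WW_def)
          then show ?thesis by simp
        qed
      qed
    qed
    have ev2: "eventually (\<lambda>M::real. 0 \<le> (e1 * sR y - sL y) + M * (real e1 - 1)) at_top"
      using e1r by (intro ev_nonneg) auto
    have ev3: "eventually (\<lambda>M::real. 0 \<le> (e2 * sL y - sR y) + M * (real e2 - 1)) at_top"
      using e2r by (intro ev_nonneg) auto
    obtain M where M0: "M \<ge> 0" and M1: "\<forall>m. 0 \<le> y $ m + M * ?p $ m"
      and M2: "0 \<le> (e1 * sR y - sL y) + M * (real e1 - 1)" and M3: "0 \<le> (e2 * sL y - sR y) + M * (real e2 - 1)"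
      using eventually_happens'[OF trivial_limit_at_top_linorder
          eventually_conj[OF eventually_ge_at_top[of 0] eventually_conj[OF ev1 eventually_conj[OF ev2 ev3]]]]
      by blast
    define z where "z = y + M *\<^sub>R ?p"
    have zW: "z \<in> WW e1 e2 A B X" unfolding z_def
      by (intro subspace_add[OF subspace_WW] subspace_scale[OF subspace_WW] y pW)
    have znn: "\<forall>m. 0 \<le> z $ m" using M1 unfolding z_def by simp
    have sLz: "0 \<le> sL z" and sRz: "0 \<le> sR z" using znn by (simp_all add: sL_nonneg sR_nonneg)
    have zH: "sL z \<le> e1 * sR z \<and> sR z \<le> e2 * sL z"
    proof -
      from X_cases[OF X] consider "X = {1}" | "X = {2}" | "X = UNIV" by blast
      then show ?thesis
      proof cases
        case 1
        then have eq: "sL z = e1 * sR z" using zW unfolding WW_def by auto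
        have "1 \<le> real e2 * real e1" using e1r e2r mult_mono[of 1 "real e2" 1 "real e1"] by auto
        then have "sR z \<le> (real e2 * real e1) * sR z" using sRz by (simp add: mult_le_cancel_right1)
        then show ?thesis using eq by (simp add: mult.assoc)
      next
        case 2
        then have eq: "sR z = e2 * sL z" using zW unfolding WW_def by auto
        have "1 \<le> real e1 * real e2" using e1r e2r mult_mono[of 1 "real e1" 1 "real e2"] by auto
        then have "sL z \<le> (real e1 * real e2) * sL z" using sLz by (simp add: mult_le_cancel_right1)
        then show ?thesis using eq by (simp add: mult.assoc)
      next
        case 3
        then have "X \<noteq> {1}" "X \<noteq> {2}" using UNIV2_ne by auto
        then have "\<alpha> = 1" "\<beta> = 1" unfolding \<alpha>_def \<beta>_def by auto
        then have "sL z = sL y + M" "sR z = sR y + M" unfolding z_def using A B by (simp_all add: sL_pt sR_pt)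
        then show ?thesis using M2 M3 by (simp add: algebra_simps)
      qed
    qed
    have zP: "z \<in> PhiC e1 e2 A B X" unfolding PhiC_WW HC_def using zW znn zH by simp
    have "z - M *\<^sub>R ?p \<in> span (PhiC e1 e2 A B X)"
      using zP pP by (intro span_diff span_mul span_base) auto
    then show "y \<in> span (PhiC e1 e2 A B X)" unfolding z_def by simp
  qed
qed

lemma PhiC_zero: "0 \<in> PhiC e1 e2 A B X" by (simp add: PhiC_def HC_zero)

lemma aff_dim_PhiC:
  assumes e: "e1 \<ge> 2" "e2 \<ge> 2" and A: "A \<noteq> {}" and B: "B \<noteq> {}" and X: "X \<noteq> {}"
  shows "aff_dim (PhiC e1 e2 A B X) = int (card A + card B + card X) - 2"
proof -
  have "aff_dim (PhiC e1 e2 A B X) = int (dim (PhiC e1 e2 A B X))"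
    by (rule aff_dim_zero) (simp add: hull_inc PhiC_zero)
  also have "dim (PhiC e1 e2 A B X) = dim (WW e1 e2 A B X)"
    using span_PhiC[OF e A B X] by (metis dim_span)
  finally have ad: "aff_dim (PhiC e1 e2 A B X) = int (dim (WW e1 e2 A B X))" .
  from X_cases[OF X] consider "X = {1}" | "X = {2}" | "X = UNIV" by blast
  then show ?thesis
  proof cases
    case 1 then show ?thesis using ad dim_WW_1[OF e A B] by simp
  next
    case 2 then show ?thesis using ad dim_WW_2[OF e A B] by simp
  next
    case 3 then show ?thesis using ad dim_WW_UNIV[of e1 e2 A B] by simp
  qed
qed

lemma PhiP_le:
  assumes e: "e1 \<ge> 2" "e2 \<ge> 2"
  shows "PhiP e1 e2 A B X \<subseteq> PhiP e1 e2 A' B' X' \<longleftrightarrow>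
     (A = {} \<or> B = {} \<or> X = {} \<or> (A \<subseteq> A' \<and> B \<subseteq> B' \<and> X \<subseteq> X'))"
  by (rule order_char[where q = "vtx e1 e2", OF vtx_mem[OF e] PhiP_triv[OF e] PhiP_mono])

lemma PhiQ_le:
  "PhiQ A B X \<subseteq> PhiQ A' B' X' \<longleftrightarrow> (A = {} \<or> B = {} \<or> X = {} \<or> (A \<subseteq> A' \<and> B \<subseteq> B' \<and> X \<subseteq> X'))"
  by (rule order_char[where q = qv, OF qv_mem PhiQ_triv PhiQ_mono])

lemma PhiP_PhiC: "PhiP e1 e2 A B X = PhiC e1 e2 A B X \<inter> {y. sL y + sR y = 1}"
  by (simp add: PhiP_def)

lemma PhiC_inj:
  assumes e: "e1 \<ge> 2" "e2 \<ge> 2" and ne: "A \<noteq> {}" "B \<noteq> {}" "X \<noteq> {}" "A' \<noteq> {}" "B' \<noteq> {}" "X' \<noteq> {}"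
    and eq: "PhiC e1 e2 A B X = PhiC e1 e2 A' B' X'"
  shows "A = A' \<and> B = B' \<and> X = X'"
proof -
  have "PhiP e1 e2 A B X = PhiP e1 e2 A' B' X'" using eq by (simp add: PhiP_def)
  then have "PhiP e1 e2 A B X \<subseteq> PhiP e1 e2 A' B' X'" "PhiP e1 e2 A' B' X' \<subseteq> PhiP e1 e2 A B X" by auto
  then show ?thesis unfolding PhiP_le[OF e] using ne by auto
qed

lemma PhiP_inj:
  assumes e: "e1 \<ge> 2" "e2 \<ge> 2" and ne: "A \<noteq> {}" "B \<noteq> {}" "X \<noteq> {}" "A' \<noteq> {}" "B' \<noteq> {}" "X' \<noteq> {}"
    and eq: "PhiP e1 e2 A B X = PhiP e1 e2 A' B' X'"
  shows "A = A' \<and> B = B' \<and> X = X'"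
proof -
  have "PhiP e1 e2 A B X \<subseteq> PhiP e1 e2 A' B' X'" "PhiP e1 e2 A' B' X' \<subseteq> PhiP e1 e2 A B X" using eq by auto
  then show ?thesis unfolding PhiP_le[OF e] using ne by auto
qed

lemma HC_pos: "y \<in> HC e1 e2 \<Longrightarrow> y \<noteq> 0 \<Longrightarrow> sL y + sR y > 0"
proof -
  assume y: "y \<in> HC e1 e2" and n: "y \<noteq> 0"
  have nn: "\<forall>m. 0 \<le> y $ m" using y by (simp add: HC_def)
  have "sL y \<noteq> 0" using HC_sL_zero[OF y] n by blast
  then show ?thesis using sL_nonneg[OF nn] sR_nonneg[OF nn] by linarith
qed

lemma linear_h: "linear (\<lambda>y. sL y + sR y)" by (rule linearI) (simp_all add: algebra_simps)

lemma aff_dim_PhiP: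
  assumes e: "e1 \<ge> 2" "e2 \<ge> 2" and A: "A \<noteq> {}" and B: "B \<noteq> {}" and X: "X \<noteq> {}"
  shows "aff_dim (PhiP e1 e2 A B X) = int (card A + card B + card X) - 3"
proof -
  have "aff_dim (PhiC e1 e2 A B X \<inter> {y. sL y + sR y = 1}) + 1 = aff_dim (PhiC e1 e2 A B X)"
  proof (rule aff_dim_slice[OF linear_h PhiC_zero])
    show "c *\<^sub>R x \<in> PhiC e1 e2 A B X" if "x \<in> PhiC e1 e2 A B X" "0 \<le> c" for x c
      using PhiC_scale that by blast
    show "sL x + sR x > 0" if "x \<in> PhiC e1 e2 A B X" "x \<noteq> 0" for x
      using HC_pos that by (auto simp: PhiC_def)
  qed
  then show ?thesis using aff_dim_PhiC[OF e A B X] by (simp add: PhiP_def)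
qed

lemma card_sum3:
  assumes A: "(A::'a::finite set) \<noteq> {}" and B: "(B::'b::finite set) \<noteq> {}" and X: "(X::'c::finite set) \<noteq> {}"
  shows "card A + card B + card X = 3 \<longleftrightarrow> (\<exists>k l x. A = {k} \<and> B = {l} \<and> X = {x})"
proof
  have a: "card A \<ge> 1" using A by (simp add: Suc_leI card_gt_0_iff)
  have b: "card B \<ge> 1" using B by (simp add: Suc_leI card_gt_0_iff)
  have c: "card X \<ge> 1" using X by (simp add: Suc_leI card_gt_0_iff)
  assume "card A + card B + card X = 3"
  then have "card A = 1" "card B = 1" "card X = 1" using a b c by auto
  then show "\<exists>k l x. A = {k} \<and> B = {l} \<and> X = {x}" by (auto simp: card_Suc_eq)
next
  assume "\<exists>k l x. A = {k} \<and> B = {l} \<and> X = {x}"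
  then show "card A + card B + card X = 3" by auto
qed

definition fac :: "('a + 'b + 2) \<Rightarrow> ('a set \<times> 'b set \<times> 2 set)" where
  "fac i = (case i of Inl k \<Rightarrow> (- {k}, UNIV, UNIV) | Inr (Inl l) \<Rightarrow> (UNIV, - {l}, UNIV)
     | Inr (Inr x) \<Rightarrow> (UNIV, UNIV, - {x}))"

lemma compl_single_ne_UNIV [simp]: "- {k} \<noteq> (UNIV :: 'c set)" "(UNIV :: 'c set) \<noteq> - {k}"
  by auto

lemma compl_single_eq [simp]: "(- {k} = - {k'}) \<longleftrightarrow> k = k'"
  by auto

lemma inj_fac: "inj fac"
proof (rule injI)
  fix i j :: "'a + 'b + 2" assume eq: "fac i = fac j"
  show "i = j"
  proof (cases i)
    case (Inl k)
    show ?thesis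
    proof (cases j)
      case (Inl k') then show ?thesis using eq \<open>i = Inl k\<close> by (simp add: fac_def)
    next
      case (Inr r) then show ?thesis using eq \<open>i = Inl k\<close> by (cases r) (simp_all add: fac_def)
    qed
  next
    case (Inr r)
    show ?thesis
    proof (cases j)
      case (Inl k') then show ?thesis using eq \<open>i = Inr r\<close> by (cases r) (simp_all add: fac_def)
    next
      case (Inr r') then show ?thesis using eq \<open>i = Inr r\<close> by (cases r; cases r') (simp_all add: fac_def)
    qed
  qed
qed

lemma compl_single_ne: "CARD('c::finite) \<ge> 2 \<Longrightarrow> - {k::'c} \<noteq> {}"
proof
  assume c: "CARD('c) \<ge> 2" and e: "- {k} = {}"
  then have h: "(UNIV :: 'c set) = {k}" by auto
  have "CARD('c) = card {k}" using arg_cong[OF h, of card] .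
  then have "CARD('c) = 1" by simp
  then show False using c by simp
qed

lemma card_compl_single: "card (- {k::'c::finite}) = CARD('c) - 1"
proof -
  have "- {k} = UNIV - {k}" by auto
  then show ?thesis by (simp add: card_Diff_subset)
qed

lemma card_eq_UNIV_minus1:
  assumes "card (A::'c::finite set) + 1 = CARD('c)"
  shows "\<exists>k. A = - {k}"
proof -
  have "card (UNIV - A) = 1" using assms by (simp add: card_Diff_subset)
  then obtain k where "UNIV - A = {k}" by (auto simp: card_Suc_eq)
  then have "A = - {k}" by auto
  then show ?thesis by blast
qed

lemma card_eq_UNIV:
  assumes "card (A::'c::finite set) = CARD('c)" shows "A = UNIV"
proof (rule card_subset_eq)
  show "finite (UNIV :: 'c set)" by simp
  show "A \<subseteq> UNIV" by simp
  show "card A = card (UNIV :: 'c set)" using assms by simp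
qed

lemma fac_char:
  assumes dA: "CARD('a::finite) \<ge> 2" and dB: "CARD('b::finite) \<ge> 2"
    and A: "(A::'a set) \<noteq> {}" and B: "(B::'b set) \<noteq> {}" and X: "(X::2 set) \<noteq> {}"
  shows "card A + card B + card X = CARD('a) + CARD('b) + 1 \<longleftrightarrow> (A, B, X) \<in> range fac"
proof
  have a: "card A \<le> CARD('a)" by (rule card_mono) auto
  have b: "card B \<le> CARD('b)" by (rule card_mono) auto
  have c: "card X \<le> 2" using card_mono[of "UNIV :: 2 set" X] by simp
  assume s: "card A + card B + card X = CARD('a) + CARD('b) + 1"
  then consider "card A + 1 = CARD('a)" "card B = CARD('b)" "card X = 2"
    | "card A = CARD('a)" "card B + 1 = CARD('b)" "card X = 2"
    | "card A = CARD('a)" "card B = CARD('b)" "card X + 1 = 2"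
    using a b c by linarith
  then show "(A, B, X) \<in> range fac"
  proof cases
    case 1
    then obtain k where "A = - {k}" using card_eq_UNIV_minus1 by blast
    moreover have "B = UNIV" "X = UNIV" using 1 card_eq_UNIV[of B] card_eq_UNIV[of X] by auto
    ultimately have "(A, B, X) = fac (Inl k)" by (simp add: fac_def)
    then show ?thesis by blast
  next
    case 2
    then obtain l where "B = - {l}" using card_eq_UNIV_minus1 by blast
    moreover have "A = UNIV" "X = UNIV" using 2 card_eq_UNIV[of A] card_eq_UNIV[of X] by auto
    ultimately have "(A, B, X) = fac (Inr (Inl l))" by (simp add: fac_def)
    then show ?thesis by blast
  next
    case 3
    then obtain x where "X = - {x}" using card_eq_UNIV_minus1[of X] by auto
    moreover have "A = UNIV" "B = UNIV" using 3 card_eq_UNIV[of A] card_eq_UNIV[of B] by auto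
    ultimately have "(A, B, X) = fac (Inr (Inr x))" by (simp add: fac_def)
    then show ?thesis by blast
  qed
next
  assume "(A, B, X) \<in> range fac"
  then obtain i where i: "(A, B, X) = fac i" by blast
  have pA: "CARD('a) > 0" and pB: "CARD('b) > 0" using dA dB by auto
  show "card A + card B + card X = CARD('a) + CARD('b) + 1"
    using i pA pB by (auto simp: fac_def card_compl_single split: sum.splits)
qed

lemma fac_ne:
  assumes dA: "CARD('a::finite) \<ge> 2" and dB: "CARD('b::finite) \<ge> 2" and f: "fac i = ((A::'a set), (B::'b set), (X::2 set))"
  shows "A \<noteq> {}" "B \<noteq> {}" "X \<noteq> {}"
  using f compl_single_ne[OF dA] compl_single_ne[OF dB] compl_single_ne[of "_::2"]
  by (auto simp: fac_def split: sum.splits)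

lemma sum_UNIV_Plus: "(\<Sum>m\<in>(UNIV::('a::finite + 'b::finite) set). f m) = (\<Sum>k\<in>UNIV. f (Inl k)) + (\<Sum>l\<in>UNIV. f (Inr l))"
proof -
  have h: "sum f ((UNIV::'a set) <+> (UNIV::'b set)) = sum (f \<circ> Inl) UNIV + sum (f \<circ> Inr) UNIV"
    by (rule sum.Plus) simp_all
  then show ?thesis by (simp add: o_def)
qed

lemma CARD_Plus: "CARD('a::finite + 'b::finite) = CARD('a) + CARD('b)"
proof -
  have "CARD('a + 'b) = card ((UNIV::'a set) <+> (UNIV::'b set))" by (simp only: UNIV_Plus_UNIV)
  also have "\<dots> = CARD('a) + CARD('b)" by (simp add: card_Plus)
  finally show ?thesis .
qed

definition aL :: "real^('a::finite + 'b::finite)" where "aL = (\<chi> m. case m of Inl _ \<Rightarrow> 1 | Inr _ \<Rightarrow> 0)"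
definition aR :: "real^('a::finite + 'b::finite)" where "aR = (\<chi> m. case m of Inl _ \<Rightarrow> 0 | Inr _ \<Rightarrow> 1)"

lemma aL_inner: "aL \<bullet> y = sL y"
  by (simp add: aL_def inner_vec_def sum_UNIV_Plus sL_def)
lemma aR_inner: "aR \<bullet> y = sR y"
  by (simp add: aR_def inner_vec_def sum_UNIV_Plus sR_def)

lemma PhiC_full: "PhiC e1 e2 UNIV UNIV UNIV = HC e1 e2" by (simp add: PhiC_def)
lemma PhiP_full: "PhiP e1 e2 UNIV UNIV UNIV = P0 e1 e2" by (simp add: PhiP_def PhiC_full P0_def)

lemma polytope_P0: "polytope (P0 e1 e2)"
proof -
  have eq: "P0 e1 e2 = (\<Inter>(range (\<lambda>m. {y. (- axis m 1) \<bullet> y \<le> 0}))) \<inter> {y. (aL - e1 *\<^sub>R aR) \<bullet> y \<le> 0}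
     \<inter> {y. (aR - e2 *\<^sub>R aL) \<bullet> y \<le> 0} \<inter> {y. (aL + aR) \<bullet> y = 1}"
    by (auto simp: P0_def HC_def inner_diff_left inner_add_left aL_inner aR_inner inner_commute[of "axis _ _"] inner_axis)
  have poly: "polyhedron (P0 e1 e2)"
    unfolding eq
    by (intro polyhedron_Int polyhedron_Inter polyhedron_halfspace_le polyhedron_halfspace_ge polyhedron_hyperplane) (auto intro: polyhedron_halfspace_ge)
  have "P0 e1 e2 \<subseteq> cbox 0 1"
  proof
    fix y assume y: "y \<in> P0 e1 e2"
    then have nn: "\<forall>m. 0 \<le> y $ m" and s: "sL y + sR y = 1" by (auto simp: P0_def HC_def)
    have tot: "(\<Sum>m\<in>UNIV. y $ m) = 1" using s by (simp add: sum_UNIV_Plus sL_def sR_def)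
    have "y $ m \<le> 1" for m
    proof -
      have "y $ m \<le> (\<Sum>m\<in>UNIV. y $ m)" by (rule member_le_sum) (use nn in auto)
      then show ?thesis using tot by simp
    qed
    then show "y \<in> cbox 0 1" using nn by (simp add: mem_box_cart)
  qed
  then have "bounded (P0 e1 e2)" using bounded_cbox bounded_subset by blast
  then show ?thesis using poly by (simp add: polytope_eq_bounded_polyhedron)
qed

lemma zero_notin_aff_P0: "0 \<notin> affine hull (P0 e1 e2)"
proof -
  have aff: "affine {y::real^('a::finite + 'b::finite). sL y + sR y = 1}"
    unfolding affine_def
  proof (intro allI impI ballI)
    fix x y :: "real^('a + 'b)" and u v :: real
    assume x: "x \<in> {y. sL y + sR y = 1}" and y: "y \<in> {y. sL y + sR y = 1}" and uv: "u + v = 1"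
    have "sL (u *\<^sub>R x + v *\<^sub>R y) + sR (u *\<^sub>R x + v *\<^sub>R y) = u * (sL x + sR x) + v * (sL y + sR y)"
      by (simp add: algebra_simps)
    also have "\<dots> = 1" using x y uv by simp
    finally show "u *\<^sub>R x + v *\<^sub>R y \<in> {y. sL y + sR y = 1}" by simp
  qed
  have "affine hull (P0 e1 e2 :: (real^('a + 'b)) set) \<subseteq> {y. sL y + sR y = 1}"
    by (rule hull_minimal) (use aff in \<open>auto simp: P0_def\<close>)
  then show ?thesis by auto
qed

lemma HC_cone_P0:
  fixes e1 e2 :: nat
  assumes e: "e1 \<ge> 2" "e2 \<ge> 2"
  shows "(HC e1 e2 :: (real^('a::finite + 'b::finite)) set) = {t *\<^sub>R x | t x. 0 \<le> t \<and> x \<in> (P0 e1 e2 :: (real^('a::finite + 'b::finite)) set)}"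
proof
  show "{t *\<^sub>R x | t x. 0 \<le> t \<and> x \<in> P0 e1 e2} \<subseteq> (HC e1 e2 :: (real^('a + 'b)) set)"
    using HC_scale by (auto simp: P0_def)
  show "(HC e1 e2 :: (real^('a + 'b)) set) \<subseteq> {t *\<^sub>R x | t x. 0 \<le> t \<and> x \<in> P0 e1 e2}"
  proof
    fix y :: "real^('a + 'b)" assume y: "y \<in> HC e1 e2"
    show "y \<in> {t *\<^sub>R x | t x. 0 \<le> t \<and> x \<in> P0 e1 e2}"
    proof (cases "y = 0")
      case True
      define k :: 'a where "k = undefined"
      define l :: 'b where "l = undefined"
      have "vtx e1 e2 k l 1 \<in> PhiP e1 e2 UNIV UNIV UNIV" by (simp only: vtx_mem[OF e]) simp
      then have "vtx e1 e2 k l 1 \<in> P0 e1 e2" by (simp add: PhiP_full)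
      moreover have "y = 0 *\<^sub>R vtx e1 e2 k l 1" using True by simp
      ultimately show ?thesis by blast
    next
      case False
      define s where "s = sL y + sR y"
      have s: "s > 0" using HC_pos[OF y False] s_def by simp
      have "(1 / s) *\<^sub>R y \<in> HC e1 e2" using HC_scale[OF y] s by simp
      moreover have "sL ((1 / s) *\<^sub>R y) + sR ((1 / s) *\<^sub>R y) = 1"
      proof -
        have "sL ((1 / s) *\<^sub>R y) + sR ((1 / s) *\<^sub>R y) = (1 / s) * s" unfolding s_def by (simp add: distrib_left)
        then show ?thesis using s by simp
      qed
      ultimately have "(1 / s) *\<^sub>R y \<in> P0 e1 e2" by (simp add: P0_def)
      moreover have "y = s *\<^sub>R ((1 / s) *\<^sub>R y)" using s by simp
      ultimately have "y = s *\<^sub>R ((1 / s) *\<^sub>R y) \<and> 0 \<le> s \<and> (1 / s) *\<^sub>R y \<in> P0 e1 e2" using s by simp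
      then show ?thesis by blast
    qed
  qed
qed

lemma card_UNIV_times: "card (UNIV :: ('a::finite \<times> 'c::finite) set) = CARD('a) * CARD('c)"
proof -
  have "card ((UNIV :: 'a set) \<times> (UNIV :: 'c set)) = CARD('a) * CARD('c)" by (rule card_cartesian_product)
  then show ?thesis by simp
qed

lemma vertex_set:
  fixes k :: "'a::finite" and l :: "'b::finite" and x :: 2
  shows "{i. k \<in> fst (fac i) \<and> l \<in> fst (snd (fac i)) \<and> x \<in> snd (snd (fac i))}
    = Inl ` (- {k}) \<union> Inr ` (Inl ` (- {l}) \<union> Inr ` (- {x}))"
proof (rule set_eqI)
  fix i :: "'a + 'b + 2"
  show "i \<in> {i. k \<in> fst (fac i) \<and> l \<in> fst (snd (fac i)) \<and> x \<in> snd (snd (fac i))} \<longleftrightarrow>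
    i \<in> Inl ` (- {k}) \<union> Inr ` (Inl ` (- {l}) \<union> Inr ` (- {x}))"
  proof (cases i)
    case (Inl k')
    then show ?thesis by (auto simp: fac_def)
  next
    case (Inr r)
    then show ?thesis by (cases r) (auto simp: fac_def)
  qed
qed

lemma card_vertex_set:
  fixes k :: "'a::finite" and l :: "'b::finite" and x :: 2
  shows "card (Inl ` (- {k}) \<union> Inr ` (Inl ` (- {l}) \<union> Inr ` (- {x})) :: ('a + 'b + 2) set)
     = (CARD('a) - 1) + ((CARD('b) - 1) + 1)"
proof -
  have c1: "card (Inl ` (- {k}) :: ('a + 'b + 2) set) = CARD('a) - 1"
    by (simp add: card_image card_compl_single)
  have c2: "card (Inl ` (- {l}) :: ('b + 2) set) = CARD('b) - 1"
    by (simp add: card_image card_compl_single)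
  have c3: "card (Inr ` (- {x}) :: ('b + 2) set) = 1"
    by (simp add: card_image card_compl_single)
  have c4: "card (Inl ` (- {l}) \<union> Inr ` (- {x}) :: ('b + 2) set) = (CARD('b) - 1) + 1"
    using c2 c3 by (subst card_Un_disjoint) auto
  have c5: "card (Inr ` (Inl ` (- {l}) \<union> Inr ` (- {x})) :: ('a + 'b + 2) set) = (CARD('b) - 1) + 1"
    using c4 by (simp add: card_image)
  show ?thesis using c1 c5 by (subst card_Un_disjoint) auto
qed

theorem proposition4p1:
  fixes e1 e2 :: nat
  assumes "CARD('a::finite) \<ge> 2" and "CARD('b::finite) \<ge> 2" and "e1 \<ge> 2" and "e2 \<ge> 2"
  defines "C \<equiv> pos_cone (\<lambda>(ka::'a, i, la::'b, j). col_vec ka i la j)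
                 {(ka, i, la, j). i \<in> {1..e1} \<and> j \<in> {1..e2}}"
  defines "d \<equiv> CARD('a) + CARD('b)"
  shows "C = {y. (\<forall>m. 0 \<le> y $ m)
                 \<and> (\<Sum>k\<in>UNIV. y $ Inl k) \<le> real e1 * (\<Sum>l\<in>UNIV. y $ Inr l)
                 \<and> (\<Sum>l\<in>UNIV. y $ Inr l) \<le> real e2 * (\<Sum>k\<in>UNIV. y $ Inl k)}
         \<and> aff_dim C = int d
         \<and> card {F. F face_of C \<and> aff_dim F = 1} = 2 * CARD('a) * CARD('b)
         \<and> card {F. F facet_of C} = CARD('a) + CARD('b) + 2
         \<and> (\<exists>P. polytope P \<and> aff_dim P = int d - 1 \<and> 0 \<notin> affine hull P
               \<and> C = {t *\<^sub>R x | t x. 0 \<le> t \<and> x \<in> P}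
               \<and> simple_polytope P
               \<and> comb_iso P ((std_simplex :: (real^2) set) \<times> (std_simplex :: (real^'a) set)
                               \<times> (std_simplex :: (real^'b) set)))"
proof -
  have e: "e1 \<ge> 2" "e2 \<ge> 2" using assms(3,4) by auto
  have dA: "CARD('a) \<ge> 2" and dB: "CARD('b) \<ge> 2" using assms(1,2) by auto
  have CH: "C = HC e1 e2" unfolding C_def by (rule cone_eq_HC[OF e])
  have c2: "CARD(2) = 2" by simp
  have fHC: "{F. F face_of (HC e1 e2 :: (real^('a + 'b)) set)} = insert {} (range (\<lambda>(A, B, X). PhiC e1 e2 A B X))"
    by (rule faces_HC[OF e])
  have fP0: "{F. F face_of (P0 e1 e2 :: (real^('a + 'b)) set)} = range (\<lambda>(A, B, X). PhiP e1 e2 A B X)"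
    by (rule faces_P0[OF e])
  have faceC: "F face_of C \<Longrightarrow> F \<noteq> {} \<Longrightarrow> \<exists>A B X. F = PhiC e1 e2 A B X" for F
  proof -
    assume "F face_of C" "F \<noteq> {}"
    then have "F \<in> {F. F face_of (HC e1 e2 :: (real^('a + 'b)) set)}" using CH by simp
    then have "F \<in> insert {} (range (\<lambda>(A, B, X). PhiC e1 e2 A B X))" by (simp only: fHC)
    then show ?thesis using \<open>F \<noteq> {}\<close> by auto
  qed
  have PhiC_face: "PhiC e1 e2 A B X face_of C" for A :: "'a set" and B :: "'b set" and X
  proof -
    have "PhiC e1 e2 A B X \<in> insert {} (range (\<lambda>(A, B, X). PhiC e1 e2 A B X))" by auto
    then have "PhiC e1 e2 A B X \<in> {F. F face_of (HC e1 e2 :: (real^('a + 'b)) set)}" by (simp only: fHC)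
    then show ?thesis by (simp add: CH)
  qed
  have adC: "aff_dim C = int d"
    using aff_dim_PhiC[OF e, of "UNIV :: 'a set" "UNIV :: 'b set" "UNIV :: 2 set"]
    by (simp add: CH PhiC_full d_def)
  have d4: "d \<ge> 4" using dA dB unfolding d_def by simp
  have p1: "C = {y. (\<forall>m. 0 \<le> y $ m)
                 \<and> (\<Sum>k\<in>UNIV. y $ Inl k) \<le> real e1 * (\<Sum>l\<in>UNIV. y $ Inr l)
                 \<and> (\<Sum>l\<in>UNIV. y $ Inr l) \<le> real e2 * (\<Sum>k\<in>UNIV. y $ Inl k)}"
    unfolding CH HC_def sL_def sR_def by simp
  define S1 where "S1 = (\<lambda>(k, l, x). PhiC e1 e2 {k} {l} {x}) ` (UNIV :: ('a \<times> 'b \<times> 2) set)"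
  have S1eq: "{F. F face_of C \<and> aff_dim F = 1} = S1"
  proof (rule set_eqI, rule iffI)
    fix F assume F: "F \<in> {F. F face_of C \<and> aff_dim F = 1}"
    then have Ff: "F face_of C" and Fa: "aff_dim F = 1" by auto
    have "F \<noteq> {}" using Fa by auto
    then obtain A B X where FA: "F = PhiC e1 e2 A B X" using faceC Ff by blast
    have nt: "A \<noteq> {} \<and> B \<noteq> {} \<and> X \<noteq> {}"
    proof (rule ccontr)
      assume "\<not> (A \<noteq> {} \<and> B \<noteq> {} \<and> X \<noteq> {})"
      then have "F = {0}" using PhiC_triv[OF e, of A B X] FA by simp
      then show False using Fa by simp
    qed
    then have "aff_dim F = int (card A + card B + card X) - 2" using aff_dim_PhiC[OF e, of A B X] FA by simp
    then have "int (card A + card B + card X) - 2 = 1" using Fa by simp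
    then have "card A + card B + card X = 3" by simp
    then have "\<exists>k l x. A = {k} \<and> B = {l} \<and> X = {x}" using card_sum3[of A B X] nt by simp
    then obtain k l x where "A = {k}" "B = {l}" "X = {x}" by blast
    then have "F = (\<lambda>(k, l, x). PhiC e1 e2 {k} {l} {x}) (k, l, x)" using FA by simp
    then show "F \<in> S1" unfolding S1_def by (rule image_eqI) simp
  next
    fix F assume "F \<in> S1"
    then obtain k l x where F: "F = PhiC e1 e2 {k} {l} {x}" unfolding S1_def by auto
    have "aff_dim F = 1" using aff_dim_PhiC[OF e, of "{k}" "{l}" "{x}"] F by simp
    then show "F \<in> {F. F face_of C \<and> aff_dim F = 1}" using PhiC_face F by simp
  qed
  have inj1: "inj_on (\<lambda>(k, l, x). PhiC e1 e2 {k} {l} {x}) (UNIV :: ('a \<times> 'b \<times> 2) set)"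
  proof (rule inj_onI)
    fix t t' :: "'a \<times> 'b \<times> 2"
    assume eq: "(\<lambda>(k, l, x). PhiC e1 e2 {k} {l} {x}) t = (\<lambda>(k, l, x). PhiC e1 e2 {k} {l} {x}) t'"
    obtain k l x where t: "t = (k, l, x)" by (cases t) auto
    obtain k' l' x' where t': "t' = (k', l', x')" by (cases t') auto
    have "PhiC e1 e2 {k} {l} {x} = PhiC e1 e2 {k'} {l'} {x'}" using eq t t' by simp
    then have "{k} = {k'} \<and> {l} = {l'} \<and> {x} = {x'}"
      using PhiC_inj[OF e, of "{k}" "{l}" "{x}" "{k'}" "{l'}" "{x'}"] by simp
    then show "t = t'" using t t' by simp
  qed
  have p3: "card {F. F face_of C \<and> aff_dim F = 1} = 2 * CARD('a) * CARD('b)"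
  proof -
    have "card S1 = card (UNIV :: ('a \<times> 'b \<times> 2) set)" unfolding S1_def by (rule card_image[OF inj1])
    also have "\<dots> = CARD('a) * (CARD('b) * 2)" by (simp add: card_UNIV_times)
    finally show ?thesis using S1eq by simp
  qed
  define Ff where "Ff i = (case fac i of (A, B, X) \<Rightarrow> PhiC e1 e2 A B X)" for i :: "'a + 'b + 2"
  have Ffeq: "{F. F facet_of C} = Ff ` UNIV"
  proof (rule set_eqI, rule iffI)
    fix F assume "F \<in> {F. F facet_of C}"
    then have Ff: "F face_of C" and Fne: "F \<noteq> {}" and Fa: "aff_dim F = int d - 1"
      using adC by (auto simp: facet_of_def)
    obtain A B X where FA: "F = PhiC e1 e2 A B X" using faceC Ff Fne by blast
    have nt: "A \<noteq> {} \<and> B \<noteq> {} \<and> X \<noteq> {}"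
    proof (rule ccontr)
      assume "\<not> (A \<noteq> {} \<and> B \<noteq> {} \<and> X \<noteq> {})"
      then have "F = {0}" using PhiC_triv[OF e, of A B X] FA by simp
      then show False using Fa d4 by simp
    qed
    then have "aff_dim F = int (card A + card B + card X) - 2" using aff_dim_PhiC[OF e, of A B X] FA by simp
    then have "int (card A + card B + card X) - 2 = int d - 1" using Fa by simp
    then have "card A + card B + card X = CARD('a) + CARD('b) + 1" unfolding d_def by simp
    then have "(A, B, X) \<in> range fac" using fac_char[OF dA dB, of A B X] nt by simp
    then obtain i where "fac i = (A, B, X)" by auto
    then have "F = Ff i" using FA unfolding Ff_def by simp
    then show "F \<in> Ff ` UNIV" by blast
  next
    fix F assume "F \<in> Ff ` UNIV"
    then obtain i where Fi: "F = Ff i" by blast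
    obtain A B X where fi: "fac i = (A, B, X)" by (cases "fac i") auto
    have FA: "F = PhiC e1 e2 A B X" using Fi fi unfolding Ff_def by simp
    have ne: "A \<noteq> {}" "B \<noteq> {}" "X \<noteq> {}" using fac_ne[OF dA dB fi] by auto
    have "(A, B, X) \<in> range fac" by (rule range_eqI[where f = fac and x = i, OF fi[symmetric]])
    then have "card A + card B + card X = CARD('a) + CARD('b) + 1"
      using fac_char[OF dA dB ne] by simp
    then have "aff_dim F = int d - 1" using aff_dim_PhiC[OF e ne] FA unfolding d_def by simp
    moreover have "F \<noteq> {}" using FA PhiC_zero by blast
    ultimately show "F \<in> {F. F facet_of C}" using PhiC_face FA adC by (simp add: facet_of_def)
  qed
  have injF: "inj Ff"
  proof (rule injI)
    fix i j :: "'a + 'b + 2" assume eq: "Ff i = Ff j"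
    obtain A B X where fi: "fac i = (A, B, X)" by (cases "fac i") auto
    obtain A' B' X' where fj: "fac j = (A', B', X')" by (cases "fac j") auto
    have "PhiC e1 e2 A B X = PhiC e1 e2 A' B' X'" using eq fi fj unfolding Ff_def by simp
    then have "A = A' \<and> B = B' \<and> X = X'"
      by (rule PhiC_inj[OF e fac_ne[OF dA dB fi] fac_ne[OF dA dB fj]])
    then have "fac i = fac j" using fi fj by simp
    then show "i = j" by (rule injD[OF inj_fac])
  qed
  have p4: "card {F. F facet_of C} = CARD('a) + CARD('b) + 2"
  proof -
    have "card {F. F facet_of C} = card (UNIV :: ('a + 'b + 2) set)"
      unfolding Ffeq by (rule card_image[OF injF])
    also have "\<dots> = CARD('a) + (CARD('b) + 2)" by (simp add: CARD_Plus)
    finally show ?thesis by simp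
  qed
  define P where "P = (P0 e1 e2 :: (real^('a + 'b)) set)"
  have adP: "aff_dim P = int d - 1"
    using aff_dim_PhiP[OF e, of "UNIV :: 'a set" "UNIV :: 'b set" "UNIV :: 2 set"]
    by (simp add: P_def PhiP_full d_def)
  have faceP: "F face_of P \<Longrightarrow> \<exists>A B X. F = PhiP e1 e2 A B X" for F
  proof -
    assume "F face_of P"
    then have "F \<in> {F. F face_of (P0 e1 e2 :: (real^('a + 'b)) set)}" using P_def by simp
    then have "F \<in> range (\<lambda>(A, B, X). PhiP e1 e2 A B X)" by (simp only: fP0)
    then show ?thesis by auto
  qed
  have PhiP_face: "PhiP e1 e2 A B X face_of P" for A :: "'a set" and B :: "'b set" and X
  proof -
    have "PhiP e1 e2 A B X \<in> range (\<lambda>(A, B, X). PhiP e1 e2 A B X)" by auto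
    then have "PhiP e1 e2 A B X \<in> {F. F face_of (P0 e1 e2 :: (real^('a + 'b)) set)}" by (simp only: fP0)
    then show ?thesis by (simp add: P_def)
  qed
  define Gf where "Gf i = (case fac i of (A, B, X) \<Rightarrow> PhiP e1 e2 A B X)" for i :: "'a + 'b + 2"
  have Gfeq: "{F. F facet_of P} = Gf ` UNIV"
  proof (rule set_eqI, rule iffI)
    fix F assume "F \<in> {F. F facet_of P}"
    then have Ff: "F face_of P" and Fne: "F \<noteq> {}" and Fa: "aff_dim F = int d - 2"
      using adP by (auto simp: facet_of_def)
    obtain A B X where FA: "F = PhiP e1 e2 A B X" using faceP Ff by blast
    have nt: "A \<noteq> {} \<and> B \<noteq> {} \<and> X \<noteq> {}"
    proof (rule ccontr)
      assume "\<not> (A \<noteq> {} \<and> B \<noteq> {} \<and> X \<noteq> {})"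
      then have "F = {}" using PhiP_triv[OF e, of A B X] FA by simp
      then show False using Fne by simp
    qed
    then have "aff_dim F = int (card A + card B + card X) - 3" using aff_dim_PhiP[OF e, of A B X] FA by simp
    then have "int (card A + card B + card X) - 3 = int d - 2" using Fa by simp
    then have "card A + card B + card X = CARD('a) + CARD('b) + 1" unfolding d_def by simp
    then have "(A, B, X) \<in> range fac" using fac_char[OF dA dB, of A B X] nt by simp
    then obtain i where "fac i = (A, B, X)" by auto
    then have "F = Gf i" using FA unfolding Gf_def by simp
    then show "F \<in> Gf ` UNIV" by blast
  next
    fix F assume "F \<in> Gf ` UNIV"
    then obtain i where Fi: "F = Gf i" by blast
    obtain A B X where fi: "fac i = (A, B, X)" by (cases "fac i") auto
    have FA: "F = PhiP e1 e2 A B X" using Fi fi unfolding Gf_def by simp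
    have ne: "A \<noteq> {}" "B \<noteq> {}" "X \<noteq> {}" using fac_ne[OF dA dB fi] by auto
    have "(A, B, X) \<in> range fac" by (rule range_eqI[where f = fac and x = i, OF fi[symmetric]])
    then have "card A + card B + card X = CARD('a) + CARD('b) + 1"
      using fac_char[OF dA dB ne] by simp
    then have "aff_dim F = int d - 2" using aff_dim_PhiP[OF e ne] FA unfolding d_def by simp
    moreover have "F \<noteq> {}"
    proof
      assume "F = {}"
      then have "aff_dim F = -1" by simp
      then show False using \<open>aff_dim F = int d - 2\<close> d4 by simp
    qed
    ultimately show "F \<in> {F. F facet_of P}" using PhiP_face FA adP by (simp add: facet_of_def)
  qed
  have injG: "inj Gf"
  proof (rule injI)
    fix i j :: "'a + 'b + 2" assume eq: "Gf i = Gf j"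
    obtain A B X where fi: "fac i = (A, B, X)" by (cases "fac i") auto
    obtain A' B' X' where fj: "fac j = (A', B', X')" by (cases "fac j") auto
    have "PhiP e1 e2 A B X = PhiP e1 e2 A' B' X'" using eq fi fj unfolding Gf_def by simp
    then have "A = A' \<and> B = B' \<and> X = X'"
      by (rule PhiP_inj[OF e fac_ne[OF dA dB fi] fac_ne[OF dA dB fj]])
    then have "fac i = fac j" using fi fj by simp
    then show "i = j" by (rule injD[OF inj_fac])
  qed
  have simple: "simple_polytope P"
    unfolding simple_polytope_def
  proof (intro conjI allI impI)
    show "polytope P" unfolding P_def by (rule polytope_P0)
    fix v assume "v extreme_point_of P"
    then have vf: "{v} face_of P" by (simp add: face_of_singleton)
    then obtain A B X where vA: "{v} = PhiP e1 e2 A B X" using faceP by blast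
    have nt: "A \<noteq> {} \<and> B \<noteq> {} \<and> X \<noteq> {}"
    proof (rule ccontr)
      assume "\<not> (A \<noteq> {} \<and> B \<noteq> {} \<and> X \<noteq> {})"
      then have "{v} = {}" using PhiP_triv[OF e, of A B X] vA by simp
      then show False by simp
    qed
    have "aff_dim {v} = 0" by simp
    moreover have "aff_dim {v} = int (card A + card B + card X) - 3" using aff_dim_PhiP[OF e, of A B X] vA nt by simp
    ultimately have "int (card A + card B + card X) - 3 = 0" by simp
    then have "card A + card B + card X = 3" by simp
    then have "\<exists>k l x. A = {k} \<and> B = {l} \<and> X = {x}" using card_sum3[of A B X] nt by simp
    then obtain k l x where kl: "A = {k}" "B = {l}" "X = {x}" by blast
    have mem: "v \<in> Gf i \<longleftrightarrow> k \<in> fst (fac i) \<and> l \<in> fst (snd (fac i)) \<and> x \<in> snd (snd (fac i))" for i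
    proof -
      obtain A' B' X' where fi: "fac i = (A', B', X')" by (cases "fac i") auto
      have ne: "A' \<noteq> {}" "B' \<noteq> {}" "X' \<noteq> {}" using fac_ne[OF dA dB fi] by auto
      have "v \<in> Gf i \<longleftrightarrow> {v} \<subseteq> PhiP e1 e2 A' B' X'" using fi unfolding Gf_def by simp
      also have "\<dots> \<longleftrightarrow> PhiP e1 e2 {k} {l} {x} \<subseteq> PhiP e1 e2 A' B' X'" using vA kl by simp
      also have "\<dots> \<longleftrightarrow> k \<in> A' \<and> l \<in> B' \<and> x \<in> X'" by (simp add: PhiP_le[OF e])
      finally show ?thesis using fi by simp
    qed
    have "{F. F facet_of P \<and> v \<in> F} = {F \<in> Gf ` UNIV. v \<in> F}" using Gfeq by auto
    also have "\<dots> = Gf ` {i. v \<in> Gf i}" by auto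
    finally have "{F. F facet_of P \<and> v \<in> F} = Gf ` {i. v \<in> Gf i}" .
    then have "card {F. F facet_of P \<and> v \<in> F} = card {i. v \<in> Gf i}"
      using card_image[OF inj_on_subset[OF injG subset_UNIV]] by simp
    also have "{i. v \<in> Gf i} = Inl ` (- {k}) \<union> Inr ` (Inl ` (- {l}) \<union> Inr ` (- {x}))"
      using vertex_set[of k l x] mem by simp
    also have "card \<dots> = (CARD('a) - 1) + ((CARD('b) - 1) + 1)" by (rule card_vertex_set)
    finally have "card {F. F facet_of P \<and> v \<in> F} = (CARD('a) - 1) + ((CARD('b) - 1) + 1)" .
    then show "int (card {F. F facet_of P \<and> v \<in> F}) = aff_dim P"
      using adP dA dB unfolding d_def by simp
  qed
  have ci: "comb_iso P ((std_simplex :: (real^2) set) \<times> (std_simplex :: (real^'a) set)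
                               \<times> (std_simplex :: (real^'b) set))"
  proof -
    have "comb_iso P (QQ :: ('a, 'b) qt set)"
    proof (rule comb_iso_abstract)
      show "{F. F face_of P} = range (\<lambda>(A, B, X). PhiP e1 e2 A B X)" using fP0 P_def by simp
      show "{G. G face_of (QQ :: ('a, 'b) qt set)} = range (\<lambda>(A, B, X). PhiQ A B X)" by (rule faces_QQ)
      show "PhiP e1 e2 A B X \<subseteq> PhiP e1 e2 A' B' X' \<longleftrightarrow> PhiQ A B X \<subseteq> PhiQ A' B' X'" for A B X A' B' X'
        by (simp only: PhiP_le[OF e] PhiQ_le)
    qed
    then show ?thesis by (simp add: QQ_def)
  qed
  have p5: "\<exists>P. polytope P \<and> aff_dim P = int d - 1 \<and> 0 \<notin> affine hull P
               \<and> C = {t *\<^sub>R x | t x. 0 \<le> t \<and> x \<in> P}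
               \<and> simple_polytope P
               \<and> comb_iso P ((std_simplex :: (real^2) set) \<times> (std_simplex :: (real^'a) set)
                               \<times> (std_simplex :: (real^'b) set))"
  proof (intro exI conjI)
    show "polytope P" unfolding P_def by (rule polytope_P0)
    show "aff_dim P = int d - 1" by (rule adP)
    show "0 \<notin> affine hull P" unfolding P_def by (rule zero_notin_aff_P0)
    show "C = {t *\<^sub>R x | t x. 0 \<le> t \<and> x \<in> P}" unfolding CH P_def by (rule HC_cone_P0[OF e])
    show "simple_polytope P" by (rule simple)
    show "comb_iso P ((std_simplex :: (real^2) set) \<times> (std_simplex :: (real^'a) set)
                               \<times> (std_simplex :: (real^'b) set))" by (rule ci)
  qed
  show ?thesis
    by (intro conjI; (rule p1 | rule adC | rule p3 | rule p4 | rule p5))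
qed

end
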